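(* Let $p$ be a prime, $k\ge1$, and $a,b$ integers with $p\nmid a$; let $A$ be the permutation $x\mapsto ax+b$ of $\mathbb{Z}/p^k\mathbb{Z}$. Write $\operatorname{ord}(a)$ for the multiplicative order of $a$ modulo $p^k$, $o'=\operatorname{ord}(a)_{p'}$, $w=\nu_p(\operatorname{ord}(a))$, and $\operatorname{aord}(b)$ for the additive order of $b$ in $\mathbb{Z}/p^k\mathbb{Z}$. (I) If $p>2$: (a) if $a\not\equiv1\pmod p$: $\operatorname{CT}(A)=x_1\,x_{o'}^{(p^{k-w}-1)/o'}\prod_{s=1}^{w}x_{o'p^s}^{p^{k-1-w}(p-1)/o'}$; (b) if $a\equiv1\pmod p$ and $\nu_p^{(k)}(b)\ge t:=\nu_p^{(k)}(a-1)$: $\operatorname{CT}(A)=x_1^{p^{t}}\prod_{s=1}^{k-t}x_{p^s}^{p^{t-1}(p-1)}$; (c) if $a\equiv1\pmod p$ and $\nu_p^{(k)}(b)<\nu_p^{(k)}(a-1)$: $\operatorname{CT}(A)=x_{\operatorname{aord}(b)}^{p^k/\operatorname{aord}(b)}$. (II) If $p=2$: (a) if $k=1$, or $k=2$ and $a\equiv1\pmod 4$: $\operatorname{CT}(A)=x_{\operatorname{aord}(b)}^{2^k/\operatorname{aord}(b)}$; (b) if $k=2$, $a\equiv3\pmod4$: $\operatorname{CT}(A)=x_1^2x_2$ if $b$ is even and $x_2^2$ if $b$ is odd; (c) if $k\ge3$, write $a\equiv(-1)^\epsilon5^e\pmod{2^k}$ with $\epsilon\in\{0,1\}$, $e\in\{0,\dots,2^{k-2}-1\}$.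 If $\epsilon=1$ and $b$ odd: $\operatorname{CT}(A)=x_{2^{k-1-\nu}}^{2^{1+\nu}}$ with $\nu=\nu_2^{(k-2)}(e)$. If $\epsilon=1$ and $b$ even: $\operatorname{CT}(A)=x_1^2x_2^{2^{2+\nu'}-1}\prod_{s=2}^{k-2-\nu'}x_{2^s}^{2^{1+\nu'}}$ with $\nu'=\nu_2^{(k-3)}(e)$. If $\epsilon=0$ and $\nu_2^{(k)}(b)<\nu_2^{(k)}(a-1)$: $\operatorname{CT}(A)=x_{\operatorname{aord}(b)}^{2^k/\operatorname{aord}(b)}$. If $\epsilon=0$ and $\nu_2^{(k)}(b)\ge\nu_2^{(k)}(a-1)$: $\operatorname{CT}(A)=x_1^{2^{2+\nu}}\prod_{s=1}^{k-2-\nu}x_{2^s}^{2^{1+\nu}}$ with $\nu=\nu_2^{(k-2)}(e)$.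
   Context: For a permutation $h$ of a set of size $n$, $\operatorname{CT}(h)=x_1^{k_1}\cdots x_n^{k_n}$ where $k_i$ is the number of cycles of length $i$ of $h$; empty products equal $1$. $\nu_p(n)$ is the exponent of $p$ in $n$ ($\nu_p(0)=\infty$), $\nu_p^{(k)}(n)=\min\{\nu_p(n),k\}$; for $N>0$, $N_{p'}=N/p^{\nu_p(N)}$ is the $p'$-part of $N$. Every unit modulo $2^k$ ($k\ge3$) has a unique representation $(-1)^\epsilon 5^e$ as indicated. *)

theory Defs
  imports "HOL-Number_Theory.Number_Theory"
begin

definition orbit_of :: "('a \<Rightarrow> 'a) \<Rightarrow> 'a \<Rightarrow> 'a set" where
  "orbit_of f x = {(f ^^ n) x | n. True}"

text \<open>Cycle type of a permutation f of a finite set S, as its exponent vector: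
  cycle_type f S i = number of cycles of length i (= exponent of x_i in CT).\<close>
definition cycle_type :: "('a \<Rightarrow> 'a) \<Rightarrow> 'a set \<Rightarrow> nat \<Rightarrow> nat" where
  "cycle_type f S i = card {orbit_of f x | x. x \<in> S \<and> card (orbit_of f x) = i}"

text \<open>Monomial x_{j1}^{e1} ... x_{jm}^{em} (list of (index, exponent)), as exponent vector.\<close>
definition monom_of :: "(nat \<times> nat) list \<Rightarrow> nat \<Rightarrow> nat" where
  "monom_of xs i = (\<Sum>(j, e)\<leftarrow>xs. if j = i then e else 0)"

text \<open>The affine map x \<mapsto> a x + b on Z/p^k Z, represented on {0..<p^k}.\<close>
definition affine_map :: "nat \<Rightarrow> int \<Rightarrow> int \<Rightarrow> nat \<Rightarrow> nat" where
  "affine_map m a b x = nat ((a * int x + b) mod int m)"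

definition nu_trunc :: "nat \<Rightarrow> nat \<Rightarrow> int \<Rightarrow> nat" where
  "nu_trunc p k n = (if n = 0 then k else min (multiplicity (int p) n) k)"

definition p_prime_part :: "nat \<Rightarrow> nat \<Rightarrow> nat" where
  "p_prime_part p N = N div p ^ multiplicity p N"

definition aord :: "nat \<Rightarrow> int \<Rightarrow> nat" where
  "aord m b = (LEAST n. n > 0 \<and> [int n * b = 0] (mod int m))"

end

theory Submission
  imports Defs
begin


definition Sg :: "int \<Rightarrow> nat \<Rightarrow> int" where "Sg u n = (\<Sum>i<n. u^i)"

lemma Sg_0[simp]: "Sg u 0 = 0" by (simp add: Sg_def)
lemma Sg_Suc': "Sg u (Suc n) = Sg u n + u^n" by (simp add: Sg_def)
lemma Sg_geo: "(u - 1) * Sg u n = u^n - 1"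
  by (induction n) (simp_all add: Sg_Suc' algebra_simps)
lemma Sg_add: "Sg u (n + l) = Sg u n + u^n * Sg u l"
  by (induction l) (simp_all add: Sg_Suc' algebra_simps power_add)
lemma Sg_Suc: "Sg u (Suc n) = 1 + u * Sg u n"
  using Sg_add[of u 1 n] by (simp add: Sg_def)
lemma Sg_mult: "Sg u (q * n) = Sg u n * Sg (u^n) q"
proof (induction q)
  case (Suc q)
  have "Sg u (Suc q * n) = Sg u (n + q * n)" by simp
  also have "\<dots> = Sg u n + u^n * Sg u (q*n)" by (rule Sg_add)
  also have "\<dots> = Sg u n + u^n * (Sg u n * Sg (u^n) q)" using Suc.IH by simp
  also have "\<dots> = Sg u n * (1 + u^n * Sg (u^n) q)" by (simp add: algebra_simps)
  also have "\<dots> = Sg u n * Sg (u^n) (Suc q)" by (simp add: Sg_Suc)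
  finally show ?case .
qed simp
lemma Sg_cong: "[u = 1] (mod m) \<Longrightarrow> [Sg u n = int n] (mod m)"
proof (induction n)
  case (Suc n)
  have "[u^n = 1^n] (mod m)" using Suc.prems by (rule cong_pow)
  then have "[Sg u n + u^n = int n + 1] (mod m)" using Suc by (intro cong_add) auto
  then show ?case by (simp add: Sg_Suc' add.commute)
qed simp

lemma int_prime_nonunit: "prime p \<Longrightarrow> \<not> is_unit (int p)"
  using not_prime_unit prime_nat_int_transfer by blast

lemma nu_trunc_le: "nu_trunc p k G \<le> k"
  by (simp add: nu_trunc_def)

lemma nu_trunc_dvd:
  assumes "prime p" "j \<le> k"
  shows "(int p ^ j dvd G) \<longleftrightarrow> j \<le> nu_trunc p k G"
proof (cases "G = 0")
  case True then show ?thesis using assms by (simp add: nu_trunc_def)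
next
  case False
  have "\<not> is_unit (int p)" using assms(1) by (rule int_prime_nonunit)
  then show ?thesis using False assms(2) power_dvd_iff_le_multiplicity[of G "int p" j]
    by (auto simp: nu_trunc_def)
qed

lemma nu_trunc_unique:
  assumes "prime p" "v \<le> k" "\<forall>j\<le>k. int p^j dvd G \<longleftrightarrow> j \<le> v"
  shows "nu_trunc p k G = v"
proof -
  have "v \<le> nu_trunc p k G" using assms nu_trunc_dvd[of p v k G] by auto
  moreover have "nu_trunc p k G \<le> v" using assms nu_trunc_dvd[of p "nu_trunc p k G" k G] nu_trunc_le
    by auto
  ultimately show ?thesis by simp
qed

lemma dvd_mult_trunc:
  assumes p: "prime p" and K: "K \<le> k"
  shows "(int p ^ K dvd S * G) \<longleftrightarrow> (int p ^ (K - nu_trunc p k G) dvd S)"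
proof (cases "K \<le> nu_trunc p k G")
  case True
  then have "int p ^ K dvd G" using nu_trunc_dvd[OF p K] by simp
  then show ?thesis using True by simp
next
  case False
  define v where "v = nu_trunc p k G"
  have vk: "v < k" using False K v_def by simp
  then have G0: "G \<noteq> 0" by (auto simp: v_def nu_trunc_def)
  then have vm: "v = multiplicity (int p) G" using vk by (auto simp: v_def nu_trunc_def)
  have nu: "\<not> is_unit (int p)" using p by (rule int_prime_nonunit)
  obtain y where y0: "G = int p ^ multiplicity (int p) G * y" "\<not> int p dvd y"
    using multiplicity_decompose'[OF G0 nu] by blast
  have y: "G = int p ^ v * y" "\<not> int p dvd y" using y0 vm by simp_all
  have Kv: "K = v + (K - v)" using False v_def by simp
  have "int p ^ K dvd S * G \<longleftrightarrow> int p ^ v * int p ^ (K - v) dvd int p ^ v * (S * y)"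
    by (subst Kv) (simp add: y power_add algebra_simps)
  also have "\<dots> \<longleftrightarrow> int p ^ (K - v) dvd S * y"
    using p by (intro dvd_times_left_cancel_iff) (simp add: prime_gt_0_nat)
  also have "\<dots> \<longleftrightarrow> int p ^ (K - v) dvd S"
  proof -
    have "prime (int p)" using p by (simp add: prime_nat_int_transfer)
    then have "coprime (int p) y" using y(2) by (rule prime_imp_coprime)
    then have "coprime (int p ^ (K - v)) y" by simp
    then show ?thesis by (rule coprime_dvd_mult_left_iff)
  qed
  finally show ?thesis by (simp add: v_def)
qed



lemma pow_cong_lin:
  fixes w c P :: int
  assumes "w = 1 + P * c"
  shows "P^2 dvd w^n - 1 - int n * P * c"
proof (induction n)
  case (Suc n)
  then obtain q where q: "w^n - 1 - int n * P * c = P^2 * q" by blast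
  have "w^(Suc n) - 1 - int (Suc n) * P * c = w * (w^n - 1 - int n * P * c) + (w * (1 + int n * P * c) - 1 - (int n + 1) * P * c)"
    by (simp add: algebra_simps)
  also have "\<dots> = P^2 * (w * q + int n * c^2)" using q assms by (simp add: algebra_simps power2_eq_square)
  finally show ?case by simp
qed simp

lemma Sg_cong_lin:
  fixes w c P :: int
  assumes "w = 1 + P * c"
  shows "P^2 dvd 2 * Sg w n - 2 * int n - P * c * int n * (int n - 1)"
proof (induction n)
  case (Suc n)
  have e: "2 * Sg w (Suc n) - 2 * int (Suc n) - P * c * int (Suc n) * (int (Suc n) - 1)
     = (2 * Sg w n - 2 * int n - P * c * int n * (int n - 1)) + 2 * (w^n - 1 - int n * P * c)"
    by (simp add: Sg_Suc' algebra_simps)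
  have "P^2 dvd (2 * Sg w n - 2 * int n - P * c * int n * (int n - 1)) + 2 * (w^n - 1 - int n * P * c)"
    using Suc.IH pow_cong_lin[OF assms, of n] by (blast intro: dvd_add dvd_mult)
  then show ?case by (simp only: e)
qed simp

lemma Sp_odd:
  assumes p: "prime p" "p \<noteq> 2" and w: "[w = 1] (mod int p)"
  shows "int p dvd Sg w p \<and> \<not> (int p)^2 dvd Sg w p"
proof -
  obtain c where c: "w = 1 + int p * c"
    using w by (metis cong_iff_dvd_diff cong_sym dvdE diff_eq_eq add.commute)
  have h: "(int p)^2 dvd 2 * Sg w p - 2 * int p - int p * c * int p * (int p - 1)"
    using Sg_cong_lin[OF c, of p] by simp
  have hh: "(int p)^2 dvd int p * c * int p * (int p - 1)" by (simp add: power2_eq_square)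
  have "(int p)^2 dvd 2 * (Sg w p - int p)" using dvd_add[OF h hh] by (simp add: algebra_simps)
  moreover have "coprime ((int p)^2) 2"
  proof -
    have "prime (int p)" using p by simp
    moreover have "\<not> int p dvd 2"
    proof
      assume "int p dvd 2"
      then have "p dvd 2" by presburger
      then have "p \<le> 2" by (simp add: dvd_imp_le)
      with p prime_ge_2_nat[OF p(1)] show False by simp
    qed
    ultimately have "coprime (int p) 2" by (rule prime_imp_coprime)
    then show ?thesis by simp
  qed
  ultimately have d: "(int p)^2 dvd Sg w p - int p" using coprime_dvd_mult_right_iff by blast
  have "int p dvd Sg w p"
  proof -
    have "int p dvd (int p)^2" by (simp add: power2_eq_square)
    then have "int p dvd Sg w p - int p" using d dvd_trans by blast
    then show ?thesis by (metis dvd_add_left_iff dvd_refl diff_add_cancel)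
  qed
  moreover have "\<not> (int p)^2 dvd Sg w p"
  proof
    assume a: "(int p)^2 dvd Sg w p"
    have "(int p)^2 dvd int p" using dvd_diff[OF a d] by simp
    then have "int p * int p dvd int p * 1" by (simp add: power2_eq_square)
    then have "int p dvd 1" using p by (subst (asm) dvd_times_left_cancel_iff) (auto simp: prime_gt_0_nat)
    then show False using p by (simp add: prime_gt_1_nat)  
  qed
  ultimately show ?thesis by blast
qed

lemma Sp_two:
  assumes w: "[w = 1] (mod 4)"
  shows "int 2 dvd Sg w 2 \<and> \<not> (int 2)^2 dvd Sg w 2"
proof -
  obtain c where c: "w = 1 + 4 * c"
    using w by (metis cong_iff_dvd_diff cong_sym dvdE diff_eq_eq add.commute)
  have "Sg w 2 = 2 * (1 + 2 * c)" by (simp add: Sg_def numeral_2_eq_2 c)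
  moreover have "\<not> 4 dvd 2 * (1 + 2 * c)" by presburger
  ultimately show ?thesis by simp
qed

definition Hcond :: "nat \<Rightarrow> int \<Rightarrow> bool" where
  "Hcond p u \<longleftrightarrow> [u = 1] (mod int p) \<and> (p = 2 \<longrightarrow> [u = 1] (mod 4))"

lemma Hcond_pow: "Hcond p u \<Longrightarrow> Hcond p (u^n)"
  unfolding Hcond_def using cong_pow[of u 1] by fastforce

lemma Sp:
  assumes "prime p" "Hcond p w"
  obtains r where "Sg w p = int p * r" "\<not> int p dvd r"
proof -
  have h: "int p dvd Sg w p \<and> \<not> (int p)^2 dvd Sg w p"
    using assms Sp_odd Sp_two by (cases "p = 2") (auto simp: Hcond_def)
  then obtain r where "Sg w p = int p * r" by blast
  moreover have "\<not> int p dvd r"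
    using h calculation by (auto simp: power2_eq_square)
  ultimately show ?thesis using that by blast
qed

lemma LTE:
  assumes p: "prime p" and H: "Hcond p u"
  shows "int p ^ j dvd Sg u n \<longleftrightarrow> int p ^ j dvd int n"
  using H
proof (induction j arbitrary: n u)
  case 0 then show ?case by simp
next
  case (Suc j)
  show ?case
  proof (cases "int p dvd int n")
    case False
    have "[Sg u n = int n] (mod int p)" using Suc.prems Sg_cong by (auto simp: Hcond_def)
    then have "\<not> int p dvd Sg u n" using False by (simp add: cong_dvd_iff)
    then show ?thesis using False by (meson dvd_power dvd_trans zero_less_Suc)
  next
    case True
    then obtain n' where n': "n = p * n'" by (metis dvdE of_nat_dvd_iff)
    obtain r where r: "Sg (u^n') p = int p * r" "\<not> int p dvd r"
      using Sp[OF p Hcond_pow[OF Suc.prems]] by blast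
    have "Sg u n = Sg u n' * Sg (u^n') p" by (simp add: n' Sg_mult)
    then have "int p ^ Suc j dvd Sg u n \<longleftrightarrow> int p * int p ^ j dvd int p * (Sg u n' * r)"
      by (simp add: r algebra_simps)
    also have "\<dots> \<longleftrightarrow> int p ^ j dvd Sg u n' * r"
      using p by (intro dvd_times_left_cancel_iff) (simp add: prime_gt_0_nat)
    also have "\<dots> \<longleftrightarrow> int p ^ j dvd Sg u n'"
    proof -
      have "prime (int p)" using p by simp
      then have "coprime (int p) r" using r(2) by (rule prime_imp_coprime)
      then have "coprime (int p ^ j) r" by simp
      then show ?thesis by (rule coprime_dvd_mult_left_iff)
    qed
    also have "\<dots> \<longleftrightarrow> int p ^ j dvd int n'" using Suc.IH[OF Suc.prems] .
    also have "\<dots> \<longleftrightarrow> int p * int p ^ j dvd int p * int n'"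
      using p by (intro dvd_times_left_cancel_iff[symmetric]) (simp add: prime_gt_0_nat)
    finally show ?thesis by (simp add: n')
  qed
qed



lemma affine_iter:
  assumes "m > 0" "x < m"
  shows "int ((affine_map m a b ^^ n) x) = (a^n * int x + b * Sg a n) mod int m"
proof (induction n)
  case 0 then show ?case using assms by simp
next
  case (Suc n)
  have "int ((affine_map m a b ^^ Suc n) x) = (a * int ((affine_map m a b ^^ n) x) + b) mod int m"
    using assms by (simp add: affine_map_def)
  also have "\<dots> = (a * ((a^n * int x + b * Sg a n) mod int m) + b) mod int m" using Suc by simp
  also have "\<dots> = (a * (a^n * int x + b * Sg a n) + b) mod int m" by (metis mod_add_left_eq mod_mult_right_eq)
  also have "\<dots> = (a^Suc n * int x + b * Sg a (Suc n)) mod int m" by (simp add: Sg_Suc algebra_simps)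
  finally show ?case .
qed

lemma affine_in: "m > 0 \<Longrightarrow> affine_map m a b x < m"
  unfolding affine_map_def by (simp add: nat_less_iff)

lemma affine_fix:
  assumes "m > 0" "x < m"
  shows "(affine_map m a b ^^ n) x = x \<longleftrightarrow> int m dvd Sg a n * ((a - 1) * int x + b)"
proof -
  have "(affine_map m a b ^^ n) x = x \<longleftrightarrow> int ((affine_map m a b ^^ n) x) = int x" by simp
  also have "\<dots> \<longleftrightarrow> (a^n * int x + b * Sg a n) mod int m = int x mod int m"
    using affine_iter[OF assms] assms by simp
  also have "\<dots> \<longleftrightarrow> int m dvd (a^n*int x + b * Sg a n) - int x" by (rule mod_eq_dvd_iff)
  also have "(a^n*int x + b * Sg a n) - int x = Sg a n * ((a-1)*int x + b)"
  proof -
    have g: "a^n = (a-1) * Sg a n + 1" using Sg_geo[of a n] by simp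
    show ?thesis by (subst g) (simp add: algebra_simps)
  qed
  finally show ?thesis .
qed

lemma cycle_count:
  fixes f :: "'a \<Rightarrow> 'a"
  assumes fin: "finite S" and maps: "\<And>x. x \<in> S \<Longrightarrow> f x \<in> S"
    and pos: "\<And>x. x \<in> S \<Longrightarrow> P x > 0"
    and per: "\<And>x n. x \<in> S \<Longrightarrow> (f^^n) x = x \<longleftrightarrow> P x dvd n"
  shows "cycle_type f S L = card {x\<in>S. P x = L} div L"
proof -
  have iter_in: "(f^^n) x \<in> S" if "x \<in> S" for x n
    using that by (induction n) (auto intro: maps)
  have mulP: "(f^^(P x * q)) x = x" if "x \<in> S" for x q
    using per[OF that] by simp
  have red: "(f^^n) x = (f^^(n mod P x)) x" if "x \<in> S" for x n
  proof -
    have "(f^^n) x = (f^^(n mod P x + P x * (n div P x))) x" by simp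
    also have "\<dots> = (f^^(n mod P x)) ((f^^(P x * (n div P x))) x)" by (simp only: funpow_add comp_apply)
    also have "\<dots> = (f^^(n mod P x)) x" using mulP[OF that] by simp
    finally show ?thesis .
  qed
  have orb: "orbit_of f x = (\<lambda>n. (f^^n) x) ` {..<P x}" if "x \<in> S" for x
  proof
    show "orbit_of f x \<subseteq> (\<lambda>n. (f^^n) x) ` {..<P x}"
    proof
      fix y assume "y \<in> orbit_of f x"
      then obtain n where "y = (f^^n) x" by (auto simp: orbit_of_def)
      then have "y = (f^^(n mod P x)) x" using red[OF that] by simp
      moreover have "n mod P x < P x" using pos[OF that] by simp
      ultimately show "y \<in> (\<lambda>n. (f^^n) x) ` {..<P x}" by blast
    qed
  qed (auto simp: orbit_of_def)
  have neq: "(f^^i) x \<noteq> (f^^j) x" if "x \<in> S" "i < j" "j < P x" for x i j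
  proof
    assume e: "(f^^i) x = (f^^j) x"
    have "(f^^(P x - j + i)) x = (f^^(P x - j)) ((f^^i) x)" by (simp add: funpow_add)
    also have "\<dots> = (f^^(P x - j)) ((f^^j) x)" using e by simp
    also have "\<dots> = (f^^(P x - j + j)) x" by (simp add: funpow_add)
    also have "\<dots> = x" using that mulP[OF that(1), of 1] by simp
    finally have "P x dvd P x - j + i" using per[OF that(1)] by blast
    moreover have "0 < P x - j + i" "P x - j + i < P x" using that by auto
    ultimately show False using dvd_imp_le by fastforce
  qed
  have card_orb: "card (orbit_of f x) = P x" if "x \<in> S" for x
  proof -
    have "inj_on (\<lambda>n. (f^^n) x) {..<P x}"
    proof (rule inj_onI)
      fix i j assume "i \<in> {..<P x}" "j \<in> {..<P x}" "(f^^i) x = (f^^j) x"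
      then show "i = j" using neq[OF that, of i j] neq[OF that, of j i]
        by (metis lessThan_iff linorder_neqE_nat)
    qed
    then show ?thesis by (simp add: orb[OF that] card_image)
  qed
  have self: "x \<in> orbit_of f x" for x
    by (auto simp: orbit_of_def intro: exI[of _ 0])
  have orb_sub: "orbit_of f x \<subseteq> S" if "x \<in> S" for x
    using iter_in[OF that] by (auto simp: orbit_of_def)
  have orb_mem: "orbit_of f y = orbit_of f x" if xS: "x \<in> S" and yo: "y \<in> orbit_of f x" for x y
  proof -
    obtain i where i: "y = (f^^i) x" using yo by (auto simp: orbit_of_def)
    show ?thesis
    proof
      show "orbit_of f y \<subseteq> orbit_of f x"
        by (auto simp: orbit_of_def i funpow_add[symmetric] simp del: funpow_add)
           (metis comp_apply funpow_add)
      show "orbit_of f x \<subseteq> orbit_of f y"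
      proof
        fix z assume "z \<in> orbit_of f x"
        then obtain n where n: "z = (f^^n) x" by (auto simp: orbit_of_def)
        have "(f^^(n + P x * i)) x = (f^^n) ((f^^(P x * i)) x)" by (simp add: funpow_add)
        then have z1: "z = (f^^(n + P x * i)) x" using mulP[OF xS] n by simp
        have ge: "i \<le> n + P x * i" using pos[OF xS] by (simp add: trans_le_add2)
        have "(f^^(n + P x * i)) x = (f^^(n + P x * i - i + i)) x" using ge by simp
        also have "\<dots> = (f^^(n + P x * i - i)) y" by (simp add: funpow_add i)
        finally show "z \<in> orbit_of f y" using z1 by (auto simp: orbit_of_def)
      qed
    qed
  qed
  define Orbs where "Orbs = {orbit_of f x | x. x \<in> S \<and> card (orbit_of f x) = L}"
  have ct: "cycle_type f S L = card Orbs" by (simp add: cycle_type_def Orbs_def)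
  have U: "\<Union>Orbs = {x\<in>S. P x = L}"
  proof
    show "\<Union>Orbs \<subseteq> {x\<in>S. P x = L}"
    proof
      fix z assume "z \<in> \<Union>Orbs"
      then obtain x where x: "x \<in> S" "card (orbit_of f x) = L" "z \<in> orbit_of f x"
        by (auto simp: Orbs_def)
      have "z \<in> S" using orb_sub[OF x(1)] x(3) by blast
      moreover have "P z = L" using card_orb[OF \<open>z \<in> S\<close>] orb_mem[OF x(1) x(3)] x(2) by simp
      ultimately show "z \<in> {x\<in>S. P x = L}" by simp
    qed
  next
    show "{x\<in>S. P x = L} \<subseteq> \<Union>Orbs"
      using self card_orb by (fastforce simp: Orbs_def)
  qed
  have finOrbs: "finite Orbs"
  proof -
    have "Orbs \<subseteq> orbit_of f ` S" by (auto simp: Orbs_def)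
    then show ?thesis using fin finite_surj by blast
  qed
  have cardc: "\<forall>c\<in>Orbs. card c = L" by (auto simp: Orbs_def)
  have disj: "\<forall>c1\<in>Orbs. \<forall>c2\<in>Orbs. c1 \<noteq> c2 \<longrightarrow> c1 \<inter> c2 = {}"
  proof (intro ballI impI)
    fix c1 c2 assume "c1 \<in> Orbs" "c2 \<in> Orbs" "c1 \<noteq> c2"
    then obtain x1 x2 where "x1 \<in> S" "x2 \<in> S" "c1 = orbit_of f x1" "c2 = orbit_of f x2"
      by (auto simp: Orbs_def)
    then show "c1 \<inter> c2 = {}" using orb_mem \<open>c1 \<noteq> c2\<close> by blast
  qed
  have finU: "finite (\<Union>Orbs)" using U fin by simp
  have eq: "L * card Orbs = card (\<Union>Orbs)" using card_partition[OF finOrbs finU] cardc disj by blast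
  show ?thesis
  proof (cases "L = 0")
    case True
    then have "Orbs = {}" using card_orb pos by (fastforce simp: Orbs_def)
    then show ?thesis using ct True by simp
  next
    case False
    have "card Orbs = L * card Orbs div L" using False by simp
    then show ?thesis using ct eq U by simp
  qed
qed



lemma card_res_class:
  assumes "M > 0" "r < M"
  shows "card {x\<in>{0..<M*N}. x mod M = r} = N"
proof -
  have "{x\<in>{0..<M*N}. x mod M = r} = (\<lambda>q. r + M*q) ` {0..<N}"
  proof
    show "{x\<in>{0..<M*N}. x mod M = r} \<subseteq> (\<lambda>q. r + M*q) ` {0..<N}"
    proof
      fix x assume x: "x \<in> {x\<in>{0..<M*N}. x mod M = r}"
      then have "x = r + M * (x div M)" using mod_mult_div_eq[of x M] by simp
      moreover have "x div M < N" using x assms by (auto simp: div_less_iff_less_mult mult.commute)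
      ultimately show "x \<in> (\<lambda>q. r + M*q) ` {0..<N}" by (intro image_eqI[of _ _ "x div M"]) auto
    qed
    show "(\<lambda>q. r + M*q) ` {0..<N} \<subseteq> {x\<in>{0..<M*N}. x mod M = r}"
    proof
      fix x assume "x \<in> (\<lambda>q. r + M*q) ` {0..<N}"
      then obtain q where q: "q < N" "x = r + M*q" by auto
      have "r + M*q < M + M*q" using assms by simp
      also have "\<dots> = M * (Suc q)" by simp
      also have "\<dots> \<le> M * N" using q by (intro mult_le_mono2) simp
      finally show "x \<in> {x\<in>{0..<M*N}. x mod M = r}" using q assms by simp
    qed
  qed
  moreover have "inj_on (\<lambda>q. r + M*q) {0..<N}" using assms by (auto simp: inj_on_def)
  ultimately show ?thesis by (simp add: card_image)
qed

lemma lin_count: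
  assumes p: "prime p" and al: "\<not> int p dvd \<alpha>" and i: "i \<le> K"
  shows "card {x\<in>{0..<p^K}. int p^i dvd \<alpha> * int x + \<beta>} = p^(K-i)"
proof -
  define q where "q = int p ^ i"
  have "prime (int p)" using p by simp
  then have "coprime (int p) \<alpha>" using al by (rule prime_imp_coprime)
  then have "coprime \<alpha> q" by (simp add: q_def ac_simps)
  then obtain z where z: "[\<alpha> * z = 1] (mod q)" using cong_solve_coprime_int by blast
  then have zd: "q dvd \<alpha> * z - 1" by (simp add: cong_iff_dvd_diff)
  have q0: "q > 0" using p by (simp add: q_def prime_gt_0_nat)
  define x0 where "x0 = nat ((- \<beta> * z) mod q)"
  have x0: "int x0 = (- \<beta> * z) mod q" using q0 by (simp add: x0_def)
  have "int x0 < int (p^i)" using x0 pos_mod_bound[OF q0, of "- \<beta> * z"] by (simp add: q_def)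
  then have x0l: "x0 < p^i" by (simp only: of_nat_less_iff)
  have key: "q dvd \<alpha> * int x + \<beta> \<longleftrightarrow> x mod p^i = x0" for x
  proof -
    have "q dvd \<alpha> * int x + \<beta> \<longleftrightarrow> q dvd int x + z * \<beta>"
    proof
      assume h: "q dvd \<alpha> * int x + \<beta>"
      have e: "int x + z * \<beta> = z * (\<alpha> * int x + \<beta>) - int x * (\<alpha> * z - 1)" by (simp add: algebra_simps)
      show "q dvd int x + z * \<beta>" by (subst e) (rule dvd_diff[OF dvd_mult[OF h] dvd_mult[OF zd]])
    next
      assume h: "q dvd int x + z * \<beta>"
      have e: "\<alpha> * int x + \<beta> = \<alpha> * (int x + z * \<beta>) - \<beta> * (\<alpha> * z - 1)" by (simp add: algebra_simps)
      show "q dvd \<alpha> * int x + \<beta>" by (subst e) (rule dvd_diff[OF dvd_mult[OF h] dvd_mult[OF zd]])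
    qed
    also have "\<dots> \<longleftrightarrow> int x mod q = (- \<beta> * z) mod q"
      by (simp add: mod_eq_dvd_iff algebra_simps)
    also have "\<dots> \<longleftrightarrow> int (x mod p^i) = int x0" using x0 by (simp add: q_def zmod_int)
    finally show ?thesis by simp
  qed
  have "{x\<in>{0..<p^K}. int p^i dvd \<alpha> * int x + \<beta>} = {x\<in>{0..<p^i * p^(K-i)}. x mod p^i = x0}"
    using key i by (auto simp: q_def power_add[symmetric])
  also have "card \<dots> = p^(K-i)" using x0l p by (intro card_res_class) (auto simp: prime_gt_0_nat)
  finally show ?thesis .
qed

lemma count_ge:
  assumes p: "prime p" and ta: "nu_trunc p k (a - 1) = t" and tb: "int p^t dvd b"
    and j: "t \<le> j" "j \<le> k"
  shows "card {x\<in>{0..<p^k}. int p^j dvd (a-1)*int x + b} = p^(k + t - j)"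
proof (cases "t = k")
  case True
  then have jk: "j = k" using j by simp
  have "int p^k dvd a - 1" using nu_trunc_dvd[OF p, of k k "a-1"] ta True by simp
  then have "int p^j dvd (a-1)*int x + b" for x using tb True jk by simp
  then show ?thesis using True jk by simp
next
  case False
  then have tk: "t < k" using ta nu_trunc_le[of p k "a-1"] by simp
  have "int p^t dvd a - 1" using nu_trunc_dvd[OF p, of t k "a-1"] ta tk by simp
  then obtain \<alpha> where \<alpha>: "a - 1 = int p^t * \<alpha>" by blast
  have "\<not> int p^(Suc t) dvd a - 1" using nu_trunc_dvd[OF p, of "Suc t" k "a-1"] ta tk by simp
  then have na: "\<not> int p dvd \<alpha>"
  proof (rule contrapos_nn)
    assume "int p dvd \<alpha>"
    then obtain \<gamma> where "\<alpha> = int p * \<gamma>" by blast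
    then have "a - 1 = int p^(Suc t) * \<gamma>" using \<alpha> by simp
    then show "int p^(Suc t) dvd a - 1" by simp
  qed
  obtain \<beta> where \<beta>: "b = int p^t * \<beta>" using tb by blast
  have jt: "j = t + (j - t)" using j by simp
  have eq: "int p^j dvd (a-1)*int x + b \<longleftrightarrow> int p^(j-t) dvd \<alpha> * int x + \<beta>" for x
  proof -
    have "int p^j dvd (a-1)*int x + b \<longleftrightarrow> int p^t * int p^(j-t) dvd int p^t * (\<alpha> * int x + \<beta>)"
      by (subst jt) (simp add: \<alpha> \<beta> power_add algebra_simps)
    also have "\<dots> \<longleftrightarrow> int p^(j-t) dvd \<alpha> * int x + \<beta>"
      using p by (intro dvd_times_left_cancel_iff) (simp add: prime_gt_0_nat)
    finally show ?thesis .
  qed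
  have "card {x\<in>{0..<p^k}. int p^j dvd (a-1)*int x + b} = card {x\<in>{0..<p^k}. int p^(j-t) dvd \<alpha> * int x + \<beta>}"
    using eq by simp
  also have "\<dots> = p^(k - (j - t))" using lin_count[OF p na, of "j-t" k] j by simp
  also have "k - (j - t) = k + t - j" using j by simp
  finally show ?thesis .
qed

lemma monom_of_append: "monom_of (xs @ ys) i = monom_of xs i + monom_of ys i"
  by (simp add: monom_of_def)
lemma monom_of_Cons: "monom_of ((j,e) # xs) i = (if j = i then e else 0) + monom_of xs i"
  by (simp add: monom_of_def)
lemma monom_of_Nil: "monom_of [] i = 0"
  by (simp add: monom_of_def)

lemma monom_of_map:
  assumes "inj_on h {lo..<hi}"
  shows "monom_of (map (\<lambda>s. (h s, c)) [lo..<hi]) i = (if i \<in> h ` {lo..<hi} then c else 0)"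
proof -
  have "monom_of (map (\<lambda>s. (h s, c)) [lo..<hi]) i = sum_list (map (\<lambda>s. if h s = i then c else 0) [lo..<hi])"
    by (simp add: monom_of_def comp_def)
  also have "\<dots> = (\<Sum>s\<in>{lo..<hi}. if h s = i then c else 0)"
    by (simp add: sum_set_upt_conv_sum_list_nat[symmetric])
  also have "\<dots> = (if i \<in> h ` {lo..<hi} then c else 0)"
  proof (cases "i \<in> h ` {lo..<hi}")
    case True
    then obtain s0 where s0: "s0 \<in> {lo..<hi}" "i = h s0" by auto
    have "(\<Sum>s\<in>{lo..<hi}. if h s = i then c else 0) = (\<Sum>s\<in>{lo..<hi}. if s = s0 then c else 0)"
      using assms s0 by (intro sum.cong) (auto simp: inj_on_def)
    also have "\<dots> = c" using s0 by simp
    finally show ?thesis using True by simp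
  next
    case False
    then have "(\<Sum>s\<in>{lo..<hi}. if h s = i then c else 0) = 0" by (intro sum.neutral) auto
    then show ?thesis using False by simp
  qed
  finally show ?thesis .
qed



abbreviation VG :: "nat \<Rightarrow> nat \<Rightarrow> int \<Rightarrow> int \<Rightarrow> nat \<Rightarrow> nat" where
  "VG p k a b x \<equiv> nu_trunc p k ((a-1)*int x + b)"

lemma int_pow_dvd_iff: "int p ^ j dvd int n \<longleftrightarrow> p ^ j dvd n"
  by (metis of_nat_dvd_iff of_nat_power)

lemma count_ge2:
  assumes p: "prime p" and ta: "nu_trunc p k (a - 1) = t" and tb: "int p^t dvd b"
    and j: "t \<le> j" "j \<le> k"
  shows "card {x\<in>{0..<p^k}. j \<le> VG p k a b x} = p^(k + t - j)"
proof -
  have "{x\<in>{0..<p^k}. j \<le> VG p k a b x} = {x\<in>{0..<p^k}. int p^j dvd (a-1)*int x + b}"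
    using nu_trunc_dvd[OF p j(2)] by auto
  then show ?thesis using count_ge[OF assms] by simp
qed

lemma count_between:
  assumes p: "prime p" and ta: "nu_trunc p k (a - 1) = t" and tb: "int p^t dvd b"
    and j: "t \<le> j1" "j1 \<le> j2" "j2 \<le> k"
  shows "card {x\<in>{0..<p^k}. j1 \<le> VG p k a b x \<and> VG p k a b x < j2} = p^(k + t - j1) - p^(k + t - j2)"
proof -
  have "{x\<in>{0..<p^k}. j1 \<le> VG p k a b x \<and> VG p k a b x < j2}
      = {x\<in>{0..<p^k}. j1 \<le> VG p k a b x} - {x\<in>{0..<p^k}. j2 \<le> VG p k a b x}" by auto
  moreover have "{x\<in>{0..<p^k}. j2 \<le> VG p k a b x} \<subseteq> {x\<in>{0..<p^k}. j1 \<le> VG p k a b x}"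
    using j by auto
  ultimately show ?thesis
    using count_ge2[OF p ta tb, of j1] count_ge2[OF p ta tb, of j2] j
    by (simp add: card_Diff_subset)
qed

lemma VG_ge:
  assumes p: "prime p" and ta: "nu_trunc p k (a - 1) = t" and tb: "int p^t dvd b"
  shows "t \<le> VG p k a b x"
proof -
  have tk: "t \<le> k" using ta nu_trunc_le by metis
  have "int p^t dvd a - 1" using nu_trunc_dvd[OF p tk] ta by simp
  then have "int p^t dvd (a-1)*int x + b" using tb by simp
  then show ?thesis using nu_trunc_dvd[OF p tk] by simp
qed

lemma aord_eq:
  assumes p: "prime p"
  shows "aord (p^k) b = p^(k - nu_trunc p k b)"
proof -
  have iff: "[int n * b = 0] (mod int (p^k)) \<longleftrightarrow> p^(k - nu_trunc p k b) dvd n" for n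
  proof -
    have "[int n * b = 0] (mod int (p^k)) \<longleftrightarrow> int p^k dvd int n * b" by (simp add: cong_0_iff)
    also have "\<dots> \<longleftrightarrow> int p^(k - nu_trunc p k b) dvd int n" by (rule dvd_mult_trunc[OF p order_refl])
    also have "\<dots> \<longleftrightarrow> p^(k - nu_trunc p k b) dvd n" by (rule int_pow_dvd_iff)
    finally show ?thesis .
  qed
  show ?thesis unfolding aord_def
  proof (rule Least_equality)
    show "0 < p ^ (k - nu_trunc p k b) \<and> [int (p ^ (k - nu_trunc p k b)) * b = 0] (mod int (p ^ k))"
      using iff[of "p ^ (k - nu_trunc p k b)"] p by (simp add: prime_gt_0_nat)
    show "\<And>y. 0 < y \<and> [int y * b = 0] (mod int (p ^ k)) \<Longrightarrow> p ^ (k - nu_trunc p k b) \<le> y"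
      using iff by (auto simp: dvd_imp_le)
  qed
qed

lemma affine_ct:
  fixes a b :: int and P :: "nat \<Rightarrow> nat"
  assumes p: "prime p"
    and pos: "\<And>x. x < p^k \<Longrightarrow> P x > 0"
    and per: "\<And>x n. x < p^k \<Longrightarrow> int p^k dvd Sg a n * ((a - 1) * int x + b) \<longleftrightarrow> P x dvd n"
  shows "cycle_type (affine_map (p^k) a b) {0..<p^k} L = card {x\<in>{0..<p^k}. P x = L} div L"
proof -
  have m: "p^k > 0" using p by (simp add: prime_gt_0_nat)
  show ?thesis
  proof (rule cycle_count)
    show "affine_map (p^k) a b x \<in> {0..<p^k}" for x using affine_in[OF m] by simp
    show "x \<in> {0..<p^k} \<Longrightarrow> 0 < P x" for x using pos by simp
    show "x \<in> {0..<p^k} \<Longrightarrow> (affine_map (p^k) a b ^^ n) x = x \<longleftrightarrow> P x dvd n" for x n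
      by (simp add: affine_fix[OF m] per)
  qed simp
qed

lemma caseU_ct:
  assumes p: "prime p" and PJ: "\<forall>j\<le>k. \<forall>n. int p^j dvd Sg a n \<longleftrightarrow> int p^j dvd int n"
  shows "cycle_type (affine_map (p^k) a b) {0..<p^k} L
       = card {x\<in>{0..<p^k}. p^(k - VG p k a b x) = L} div L"
proof (rule affine_ct[OF p])
  show "0 < p^(k - VG p k a b x)" for x using p by (simp add: prime_gt_0_nat)
  show "int p^k dvd Sg a n * ((a - 1) * int x + b) \<longleftrightarrow> p^(k - VG p k a b x) dvd n" for x n
  proof -
    have "int p^k dvd Sg a n * ((a - 1) * int x + b) \<longleftrightarrow> int p^(k - VG p k a b x) dvd Sg a n"
      by (rule dvd_mult_trunc[OF p order_refl])
    also have "\<dots> \<longleftrightarrow> int p^(k - VG p k a b x) dvd int n" using PJ by simp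
    also have "\<dots> \<longleftrightarrow> p^(k - VG p k a b x) dvd n" by (rule int_pow_dvd_iff)
    finally show ?thesis .
  qed
qed

lemma caseU1:
  assumes p: "prime p" and PJ: "\<forall>j\<le>k. \<forall>n. int p^j dvd Sg a n \<longleftrightarrow> int p^j dvd int n"
    and st: "nu_trunc p k b < nu_trunc p k (a-1)"
  shows "cycle_type (affine_map (p^k) a b) {0..<p^k} = monom_of [(aord (p^k) b, p^k div aord (p^k) b)]"
proof
  fix L
  define s where "s = nu_trunc p k b"
  define t where "t = nu_trunc p k (a-1)"
  have tk: "t \<le> k" by (simp add: t_def nu_trunc_le)
  have st': "s < t" using st by (simp add: s_def t_def)
  have VGs: "VG p k a b x = s" for x
  proof (rule nu_trunc_unique[OF p])
    show "s \<le> k" using st' tk by simp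
    show "\<forall>j\<le>k. int p^j dvd (a-1)*int x + b \<longleftrightarrow> j \<le> s"
    proof (intro allI impI)
      fix j assume jk: "j \<le> k"
      show "int p^j dvd (a-1)*int x + b \<longleftrightarrow> j \<le> s"
      proof
        assume h: "int p^j dvd (a-1)*int x + b"
        show "j \<le> s"
        proof (rule ccontr)
          assume "\<not> j \<le> s"
          then have sj: "Suc s \<le> j" by simp
          then have "int p^Suc s dvd (a-1)*int x + b" using h by (meson dvd_trans le_imp_power_dvd)
          moreover have "int p^Suc s dvd a - 1" using nu_trunc_dvd[OF p, of "Suc s" k "a-1"] st' tk
            by (simp add: t_def)
          ultimately have "int p^Suc s dvd b" by (metis dvd_add_right_iff dvd_mult2)
          then show False using nu_trunc_dvd[OF p, of "Suc s" k b] st' tk by (simp add: s_def)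
        qed
      next
        assume js: "j \<le> s"
        have "int p^j dvd b" using nu_trunc_dvd[OF p jk, of b] js by (simp add: s_def)
        moreover have "int p^j dvd a - 1" using nu_trunc_dvd[OF p jk, of "a-1"] js st' by (simp add: t_def)
        ultimately show "int p^j dvd (a-1)*int x + b" by simp
      qed
    qed
  qed
  have "cycle_type (affine_map (p^k) a b) {0..<p^k} L = card {x\<in>{0..<p^k}. p^(k - s) = L} div L"
    using caseU_ct[OF p PJ, of b L] VGs by simp
  also have "\<dots> = (if p^(k-s) = L then p^k div L else 0)" by simp
  also have "\<dots> = monom_of [(aord (p^k) b, p^k div aord (p^k) b)] L"
    by (simp add: monom_of_Cons monom_of_Nil aord_eq[OF p] s_def)
  finally show "cycle_type (affine_map (p^k) a b) {0..<p^k} L = monom_of [(aord (p^k) b, p^k div aord (p^k) b)] L" .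
qed



lemma pow_inj: "1 < (p::nat) \<Longrightarrow> inj_on (\<lambda>s. p^s) A"
  by (auto simp: inj_on_def power_inject_exp)

lemma pdiff: "(p::nat)^(Suc m) - p^m = p^m * (p - 1)"
  by (simp add: diff_mult_distrib2 mult.commute)

lemma pdiff2: "1 \<le> t \<Longrightarrow> (p::nat)^(t+\<sigma>) - p^(t+\<sigma>-1) = p^\<sigma> * (p^(t-1)*(p-1))"
proof -
  assume "1 \<le> t"
  define m where "m = t - 1 + \<sigma>"
  have e: "t + \<sigma> = Suc m" "t + \<sigma> - 1 = m" using \<open>1 \<le> t\<close> by (simp_all add: m_def)
  have "p^(t+\<sigma>) - p^(t+\<sigma>-1) = p^(Suc m) - p^m" using e by simp
  also have "\<dots> = p^m * (p - 1)" by (rule pdiff)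
  also have "\<dots> = p^(t-1+\<sigma>) * (p - 1)" by (simp add: m_def)
  finally show ?thesis by (simp add: power_add ac_simps)
qed

lemma caseU2:
  assumes p: "prime p" and PJ: "\<forall>j\<le>k. \<forall>n. int p^j dvd Sg a n \<longleftrightarrow> int p^j dvd int n"
    and ta: "nu_trunc p k (a-1) = t" and t1: "1 \<le> t" and st: "t \<le> nu_trunc p k b"
  shows "cycle_type (affine_map (p^k) a b) {0..<p^k}
       = monom_of ([(1, p^t)] @ map (\<lambda>s. (p^s, p^(t-1)*(p-1))) [1..<k-t+1])"
proof
  fix L
  have tk: "t \<le> k" using ta nu_trunc_le by metis
  have tb: "int p^t dvd b" using nu_trunc_dvd[OF p tk] st by simp
  have p1: "1 < p" using p prime_gt_1_nat by auto
  have ge: "t \<le> VG p k a b x" "VG p k a b x \<le> k" for x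
    using VG_ge[OF p ta tb] nu_trunc_le by auto
  have CT: "cycle_type (affine_map (p^k) a b) {0..<p^k} L = card {x\<in>{0..<p^k}. p^(k - VG p k a b x) = L} div L"
    by (rule caseU_ct[OF p PJ])
  have M: "monom_of ([(1, p^t)] @ map (\<lambda>s. (p^s, p^(t-1)*(p-1))) [1..<k-t+1]) L
     = (if 1 = L then p^t else 0) + (if L \<in> (\<lambda>s. p^s) ` {1..<k-t+1} then p^(t-1)*(p-1) else 0)"
  proof -
    have M1: "monom_of (map (\<lambda>s. (p^s, p^(t-1)*(p-1))) [1..<k-t+1]) L = (if L \<in> (\<lambda>s. p^s) ` {1..<k-t+1} then p^(t-1)*(p-1) else 0)"
      by (rule monom_of_map[OF pow_inj[OF p1]])
    show ?thesis by (simp only: monom_of_append monom_of_Cons monom_of_Nil M1 add_0_right)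
  qed
  show "cycle_type (affine_map (p^k) a b) {0..<p^k} L = monom_of ([(1, p^t)] @ map (\<lambda>s. (p^s, p^(t-1)*(p-1))) [1..<k-t+1]) L"
  proof (cases "\<exists>\<sigma>\<le>k-t. L = p^\<sigma>")
    case True
    then obtain \<sigma> where \<sigma>: "\<sigma> \<le> k-t" "L = p^\<sigma>" by blast
    have set: "{x\<in>{0..<p^k}. p^(k - VG p k a b x) = L} = {x\<in>{0..<p^k}. k - \<sigma> \<le> VG p k a b x \<and> VG p k a b x < k - \<sigma> + 1}"
    proof -
      have "p^(k - VG p k a b x) = L \<longleftrightarrow> (k - \<sigma> \<le> VG p k a b x \<and> VG p k a b x < k - \<sigma> + 1)" for x
        using \<sigma> ge[of x] tk power_inject_exp[OF p1, of "k - VG p k a b x" \<sigma>] by auto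
      then show ?thesis by auto
    qed
    show ?thesis
    proof (cases "\<sigma> = 0")
      case True
      have "{x\<in>{0..<p^k}. k - \<sigma> \<le> VG p k a b x \<and> VG p k a b x < k - \<sigma> + 1} = {x\<in>{0..<p^k}. k \<le> VG p k a b x}"
        using True by (auto simp: nu_trunc_le le_imp_less_Suc)
      then have "card {x\<in>{0..<p^k}. p^(k - VG p k a b x) = L} = p^t"
        using set count_ge2[OF p ta tb, of k] tk by simp
      moreover have "L \<notin> (\<lambda>s. p^s) ` {1..<k-t+1}"
      proof
        assume "L \<in> (\<lambda>s. p^s) ` {1..<k-t+1}"
        then obtain s where "1 \<le> s" "L = p^s" by auto
        then have "1 < L" using one_less_power[OF p1, of s] by simp
        then show False using True \<sigma> by simp
      qed
      ultimately show ?thesis using CT M True \<sigma> by simp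
    next
      case False
      have "card {x\<in>{0..<p^k}. p^(k - VG p k a b x) = L} = p^(k + t - (k - \<sigma>)) - p^(k + t - (k - \<sigma> + 1))"
        using set count_between[OF p ta tb, of "k - \<sigma>" "k - \<sigma> + 1"] \<sigma> False tk by simp
      also have "\<dots> = p^(t + \<sigma>) - p^(t + \<sigma> - 1)" using \<sigma> False tk
        by (simp add: Suc_diff_le)
      also have "\<dots> = p^\<sigma> * (p^(t-1)*(p-1))" by (rule pdiff2[OF t1])
      finally have c: "card {x\<in>{0..<p^k}. p^(k - VG p k a b x) = L} = p^\<sigma> * (p^(t-1)*(p-1))" .
      have L1: "1 < p^\<sigma>" using False one_less_power[OF p1, of \<sigma>] by simp
      have "L \<in> (\<lambda>s. p^s) ` {1..<k-t+1}" using False \<sigma> by auto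
      then have "monom_of ([(1, p^t)] @ map (\<lambda>s. (p^s, p^(t-1)*(p-1))) [1..<k-t+1]) L = p^(t-1)*(p-1)"
        using M L1 \<sigma> by simp
      moreover have "cycle_type (affine_map (p^k) a b) {0..<p^k} L = p^(t-1)*(p-1)"
        using CT c \<sigma> p1 by simp
      ultimately show ?thesis by simp
    qed
  next
    case False
    have "{x\<in>{0..<p^k}. p^(k - VG p k a b x) = L} = {}"
    proof -
      have "p^(k - VG p k a b x) \<noteq> L" for x
        using False ge[of x] by (metis diff_le_mono2)
      then show ?thesis by auto
    qed
    then have c0: "cycle_type (affine_map (p^k) a b) {0..<p^k} L = 0" using CT by (simp only: card.empty div_0)
    have "L \<noteq> 1" using False by (metis power_0 zero_le)
    moreover have "L \<notin> (\<lambda>s. p^s) ` {1..<k-t+1}" using False by (auto simp: less_Suc_eq_le)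
    ultimately have "monom_of ([(1, p^t)] @ map (\<lambda>s. (p^s, p^(t-1)*(p-1))) [1..<k-t+1]) L = 0"
      by (simp only: M) simp
    then show ?thesis using c0 by simp
  qed
qed



lemma A_cong:
  assumes p: "prime p" and i: "i \<le> k"
  shows "[nat (a mod int (p^k)) ^ n = 1] (mod p^i) \<longleftrightarrow> int p^i dvd a^n - 1"
proof -
  define A where "A = nat (a mod int (p^k))"
  have pk: "int (p^k) > 0" using p by (simp add: prime_gt_0_nat)
  have iA: "int A = a mod int (p^k)" using pk by (simp add: A_def)
  have c1: "[int A = a] (mod int (p^k))" by (simp add: iA cong_def)
  have "int (p^i) dvd int (p^k)" using i by (simp add: le_imp_power_dvd)
  then have c2: "[int A ^ n = a ^ n] (mod int (p^i))" using cong_pow[OF c1] cong_dvd_modulus by blast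
  have "[A^n = 1] (mod p^i) \<longleftrightarrow> [int (A^n) = int 1] (mod int (p^i))" by (simp only: cong_int_iff)
  also have "\<dots> \<longleftrightarrow> [int A ^ n = 1] (mod int (p^i))" by simp
  also have "\<dots> \<longleftrightarrow> [a^n = 1] (mod int (p^i))" using c2 by (meson cong_sym cong_trans)
  also have "\<dots> \<longleftrightarrow> int p^i dvd a^n - 1" by (simp add: cong_iff_dvd_diff)
  finally show ?thesis by (simp add: A_def)
qed

lemma Ia_ord:
  assumes p: "prime p" and p2: "p \<noteq> 2" and k: "1 \<le> k" and na: "\<not> int p dvd a"
    and na1: "\<not> int p dvd a - 1"
  obtains d0 c where "1 < d0" "\<not> p dvd d0" "1 \<le> c" "c \<le> k"
    "\<And>i n. 1 \<le> i \<Longrightarrow> i \<le> k \<Longrightarrow> int p^i dvd a^n - 1 \<longleftrightarrow> d0 * p^(i - c) dvd n"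
proof -
  define A where "A = nat (a mod int (p^k))"
  have cong1: "[A^n = 1] (mod p) \<longleftrightarrow> int p dvd a^n - 1" for n
    using A_cong[OF p k, of a n] by (simp add: A_def)
  define d0 where "d0 = ord p A"
  have d0iff: "int p dvd a^n - 1 \<longleftrightarrow> d0 dvd n" for n
    using cong1[of n] ord_divides[of A n p] by (simp add: d0_def)
  have pA: "\<not> p dvd A"
  proof
    assume "p dvd A"
    then have "int p dvd int A" by simp
    moreover have "int A = a mod int (p^k)" using p by (simp add: A_def prime_gt_0_nat)
    moreover have "int p dvd int (p^k)" using k by (simp add: dvd_power)
    ultimately have "int p dvd a" by (metis dvd_mod_iff)
    then show False using na by simp
  qed
  have "[A^(p-1) = 1] (mod p)" by (rule fermat_theorem[OF p pA])
  then have d0p: "d0 dvd p - 1" using ord_divides by (simp add: d0_def)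
  have p1: "1 < p" using p prime_gt_1_nat by auto
  have d0pos: "0 < d0" using d0p p1 by (metis dvd_0_left_iff gr0I zero_less_diff)
  have "d0 \<le> p - 1" using d0p p1 by (intro dvd_imp_le) auto
  then have d0le: "d0 < p" using p1 by simp
  have d0ndvd: "\<not> p dvd d0" using d0pos d0le by (auto dest: dvd_imp_le)
  have d0ne1: "d0 \<noteq> 1"
  proof
    assume "d0 = 1"
    then have "int p dvd a^1 - 1" using d0iff[of 1] by simp
    then show False using na1 by simp
  qed
  define u where "u = a^d0"
  have Hu: "Hcond p u" using d0iff[of d0] p2 by (simp add: Hcond_def u_def cong_iff_dvd_diff)
  define c where "c = nu_trunc p k (u - 1)"
  have c1: "1 \<le> c" using nu_trunc_dvd[OF p k, of "u-1"] d0iff[of d0] by (simp add: c_def u_def)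
  have ck: "c \<le> k" by (simp add: c_def nu_trunc_le)
  have key: "int p^i dvd a^n - 1 \<longleftrightarrow> d0 * p^(i - c) dvd n" if i: "1 \<le> i" "i \<le> k" for i n
  proof (cases "d0 dvd n")
    case True
    then obtain q where q: "n = d0 * q" by blast
    have "a^n - 1 = Sg u q * (u - 1)" using Sg_geo[of u q] by (simp add: q u_def power_mult algebra_simps)
    then have "int p^i dvd a^n - 1 \<longleftrightarrow> int p^i dvd Sg u q * (u - 1)" by simp
    also have "\<dots> \<longleftrightarrow> int p^(i - c) dvd Sg u q" using dvd_mult_trunc[OF p i(2)] by (simp add: c_def)
    also have "\<dots> \<longleftrightarrow> int p^(i - c) dvd int q" by (rule LTE[OF p Hu])
    also have "\<dots> \<longleftrightarrow> p^(i - c) dvd q" by (rule int_pow_dvd_iff)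
    also have "\<dots> \<longleftrightarrow> d0 * p^(i - c) dvd n" using d0pos by (simp add: q)
    finally show ?thesis .
  next
    case False
    have "\<not> int p^i dvd a^n - 1"
    proof
      assume "int p^i dvd a^n - 1"
      moreover have "int p dvd int p^i" using i by (simp add: dvd_power)
      ultimately have "int p dvd a^n - 1" by (rule dvd_trans[rotated])
      then show False using False d0iff by simp
    qed
    moreover have "\<not> d0 * p^(i - c) dvd n" using False by (meson dvd_mult_left)
    ultimately show ?thesis by simp
  qed
  show ?thesis
    using that[of d0 c] d0pos d0ne1 d0ndvd c1 ck key by simp
qed



lemma Ia_ct:
  assumes p: "prime p" and k: "1 \<le> k" and na1: "\<not> int p dvd a - 1"
    and d0: "1 < d0" and c1: "1 \<le> c" and ck: "c \<le> k"
    and key: "\<And>i n. 1 \<le> i \<Longrightarrow> i \<le> k \<Longrightarrow> int p^i dvd a^n - 1 \<longleftrightarrow> d0 * p^(i - c) dvd n"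
  shows "ord (p^k) (nat (a mod int (p^k))) = d0 * p^(k - c)"
    and "cycle_type (affine_map (p^k) a b) {0..<p^k}
       = monom_of ([(1,1),(d0, (p^c - 1) div d0)] @ map (\<lambda>s. (d0*p^s, p^(c-1)*(p-1) div d0)) [1..<k-c+1])"
proof -
  define A where "A = nat (a mod int (p^k))"
  have oiff: "ord (p^k) A dvd N \<longleftrightarrow> d0 * p^(k - c) dvd N" for N
    using ord_divides[of A N "p^k"] A_cong[OF p, of k k a N] key[OF k order_refl, of N]
    by (simp add: A_def)
  show "ord (p^k) (nat (a mod int (p^k))) = d0 * p^(k - c)"
    using oiff[of "ord (p^k) A"] oiff[of "d0 * p^(k - c)"] by (simp add: A_def dvd_antisym)
next
  have p1: "1 < p" using p prime_gt_1_nat by auto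
  define per where "per x = (if VG p k a b x = k then 1 else d0 * p^((k - VG p k a b x) - c))" for x
  have cop: "coprime (int p^e) (a - 1)" for e
  proof -
    have "prime (int p)" using p by simp
    then have "coprime (int p) (a - 1)" using na1 by (rule prime_imp_coprime)
    then show ?thesis by simp
  qed
  have perfix: "int p^k dvd Sg a n * ((a - 1) * int x + b) \<longleftrightarrow> per x dvd n" for x n
  proof -
    have "int p^k dvd Sg a n * ((a - 1) * int x + b) \<longleftrightarrow> int p^(k - VG p k a b x) dvd Sg a n"
      by (rule dvd_mult_trunc[OF p order_refl])
    also have "\<dots> \<longleftrightarrow> per x dvd n"
    proof (cases "VG p k a b x = k")
      case True then show ?thesis by (simp add: per_def)
    next
      case False
      then have e: "1 \<le> k - VG p k a b x" "k - VG p k a b x \<le> k"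
        using nu_trunc_le[of p k "(a - 1) * int x + b"] by auto
      have "int p^(k - VG p k a b x) dvd Sg a n \<longleftrightarrow> int p^(k - VG p k a b x) dvd (a - 1) * Sg a n"
        using coprime_dvd_mult_right_iff[OF cop] by simp
      also have "\<dots> \<longleftrightarrow> int p^(k - VG p k a b x) dvd a^n - 1" by (simp add: Sg_geo)
      also have "\<dots> \<longleftrightarrow> per x dvd n" using key[OF e] False by (simp add: per_def)
      finally show ?thesis .
    qed
    finally show ?thesis .
  qed
  have CT: "cycle_type (affine_map (p^k) a b) {0..<p^k} L = card {x\<in>{0..<p^k}. per x = L} div L" for L
    by (rule affine_ct[OF p _ perfix]) (use d0 p1 in \<open>simp add: per_def\<close>)
  have t0: "nu_trunc p k (a - 1) = 0"
  proof (rule nu_trunc_unique[OF p])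
    show "\<forall>j\<le>k. int p ^ j dvd a - 1 \<longleftrightarrow> j \<le> 0"
    proof (intro allI impI)
      fix j assume "j \<le> k"
      show "int p ^ j dvd a - 1 \<longleftrightarrow> j \<le> 0"
      proof (cases j)
        case (Suc j')
        have "\<not> int p ^ j dvd a - 1"
        proof
          assume "int p ^ j dvd a - 1"
          then have "int p dvd a - 1" using Suc by (metis dvd_mult_left power_Suc)
          then show False using na1 by simp
        qed
        then show ?thesis using Suc by simp
      qed simp
    qed
  qed simp
  have tb: "int p^0 dvd b" by simp
  have VGk: "VG p k a b x \<le> k" for x by (rule nu_trunc_le)
  have injh: "inj_on (\<lambda>s. d0*p^s) A" for A
    using d0 p1 by (auto simp: inj_on_def power_inject_exp)
  define X where "X = (p^c - 1) div d0"
  define Y where "Y = p^(c-1)*(p-1) div d0"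
  have big: "d0 * p^e > 1" for e using d0 p1 by (metis less_le_trans mult.right_neutral mult_le_mono2 one_le_power order_less_imp_le)
  have big2: "d0 * p^e > d0" if "1 \<le> e" for e
    using d0 one_less_power[OF p1, of e] that by simp
  show "cycle_type (affine_map (p^k) a b) {0..<p^k}
       = monom_of ([(1,1),(d0, (p^c - 1) div d0)] @ map (\<lambda>s. (d0*p^s, p^(c-1)*(p-1) div d0)) [1..<k-c+1])"
    unfolding X_def[symmetric] Y_def[symmetric]
  proof
  fix L
  have M: "monom_of ([(1,1),(d0, X)] @ map (\<lambda>s. (d0*p^s, Y)) [1..<k-c+1]) L
     = (if 1 = L then 1 else 0) + (if d0 = L then X else 0) + (if L \<in> (\<lambda>s. d0*p^s) ` {1..<k-c+1} then Y else 0)"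
  proof -
    have M1: "monom_of (map (\<lambda>s. (d0*p^s, Y)) [1..<k-c+1]) L = (if L \<in> (\<lambda>s. d0*p^s) ` {1..<k-c+1} then Y else 0)"
      by (rule monom_of_map[OF injh])
    show ?thesis by (simp only: monom_of_append monom_of_Cons monom_of_Nil M1 add_0_right)
  qed
  show "cycle_type (affine_map (p^k) a b) {0..<p^k} L
      = monom_of ([(1,1),(d0, X)] @ map (\<lambda>s. (d0*p^s, Y)) [1..<k-c+1]) L"
  proof -
    consider (one) "L = 1" | (d) "L = d0" | (s) \<sigma> where "1 \<le> \<sigma>" "\<sigma> \<le> k - c" "L = d0 * p^\<sigma>"
      | (other) "L \<noteq> 1" "L \<noteq> d0" "\<forall>\<sigma>. 1 \<le> \<sigma> \<longrightarrow> \<sigma> \<le> k - c \<longrightarrow> L \<noteq> d0 * p^\<sigma>" by blast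
    then show ?thesis
    proof cases
      case one
      have "{x\<in>{0..<p^k}. per x = L} = {x\<in>{0..<p^k}. k \<le> VG p k a b x}"
      proof -
        have "per x = L \<longleftrightarrow> k \<le> VG p k a b x" for x
          using one big[of "(k - VG p k a b x) - c"] VGk[of x] by (auto simp: per_def)
        then show ?thesis by auto
      qed
      then have "card {x\<in>{0..<p^k}. per x = L} = 1"
        using count_ge2[OF p t0 tb, of k] by simp
      moreover have "L \<notin> (\<lambda>s. d0*p^s) ` {1..<k-c+1}" using one big by auto
      ultimately show ?thesis using CT[of L] M one d0 by simp
    next
      case d
      have "per x = L \<longleftrightarrow> k - c \<le> VG p k a b x \<and> VG p k a b x < k" for x
      proof -
        have "per x = d0 \<longleftrightarrow> VG p k a b x \<noteq> k \<and> (k - VG p k a b x) - c = 0"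
          using d0 p1 big2[of "(k - VG p k a b x) - c"] by (auto simp: per_def)
        then show ?thesis using d VGk[of x] by auto
      qed
      then have "{x\<in>{0..<p^k}. per x = L} = {x\<in>{0..<p^k}. k - c \<le> VG p k a b x \<and> VG p k a b x < k}"
        by auto
      then have "card {x\<in>{0..<p^k}. per x = L} = p^c - 1"
        using count_between[OF p t0 tb, of "k - c" k] ck by simp
      moreover have "L \<notin> (\<lambda>s. d0*p^s) ` {1..<k-c+1}" using d big2 by fastforce
      ultimately show ?thesis using CT[of L] M d d0 by (simp add: X_def)
    next
      case s
      have "per x = L \<longleftrightarrow> k - c - \<sigma> \<le> VG p k a b x \<and> VG p k a b x < k - c - \<sigma> + 1" for x
      proof -
        have "per x = L \<longleftrightarrow> VG p k a b x \<noteq> k \<and> (k - VG p k a b x) - c = \<sigma>"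
          using s d0 big[of \<sigma>] p1 by (auto simp: per_def power_inject_exp)
        then show ?thesis using s VGk[of x] by auto
      qed
      then have "{x\<in>{0..<p^k}. per x = L} = {x\<in>{0..<p^k}. k - c - \<sigma> \<le> VG p k a b x \<and> VG p k a b x < k - c - \<sigma> + 1}"
        by auto
      then have "card {x\<in>{0..<p^k}. per x = L} = p^(k - (k - c - \<sigma>)) - p^(k - (k - c - \<sigma> + 1))"
        using count_between[OF p t0 tb, of "k - c - \<sigma>" "k - c - \<sigma> + 1"] s ck by simp
      also have "\<dots> = p^(c + \<sigma>) - p^(c + \<sigma> - 1)" using s ck by (simp add: Suc_diff_le)
      also have "\<dots> = p^\<sigma> * (p^(c-1)*(p-1))" by (rule pdiff2[OF c1])
      finally have cc: "card {x\<in>{0..<p^k}. per x = L} = p^\<sigma> * (p^(c-1)*(p-1))" .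
      have "card {x\<in>{0..<p^k}. per x = L} div L = Y"
        using cc s p1 by (simp add: Y_def mult.commute[of d0] div_mult_mult2)
      moreover have "L \<in> (\<lambda>s. d0*p^s) ` {1..<k-c+1}" using s by auto
      moreover have "L \<noteq> 1" "L \<noteq> d0" using s big big2 by auto
      ultimately show ?thesis using CT[of L] M by simp
    next
      case other
      have "per x \<noteq> L" for x
      proof
        assume h: "per x = L"
        show False
        proof (cases "VG p k a b x = k")
          case True then show False using h other by (simp add: per_def)
        next
          case False
          then have "L = d0 * p^((k - VG p k a b x) - c)" using h by (simp add: per_def)
          then show False using other by (cases "(k - VG p k a b x) - c") auto
        qed
      qed
      then have "{x\<in>{0..<p^k}. per x = L} = {}" by auto
      then have "cycle_type (affine_map (p^k) a b) {0..<p^k} L = 0" using CT[of L] by (simp only: card.empty div_0)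
      moreover have "L \<notin> (\<lambda>s. d0*p^s) ` {1..<k-c+1}"
      proof
        assume "L \<in> (\<lambda>s. d0*p^s) ` {1..<k-c+1}"
        then obtain s where "1 \<le> s" "s \<le> k - c" "L = d0 * p^s" by auto
        then show False using other by blast
      qed
      ultimately show ?thesis using M other by simp
    qed
  qed
  qed
qed



lemma eps_Sg:
  assumes a3: "[a = 3] (mod 4)" and k: "2 \<le> k" and e: "1 \<le> e" "e \<le> k"
    and r: "nu_trunc 2 k (a + 1) = r"
  shows "int 2^e dvd Sg a n \<longleftrightarrow> 2^(Suc (e - r)) dvd n"
proof -
  have p: "prime (2::nat)" by simp
  obtain h where h: "a = 4 * h + 3" using a3
    by (metis cong_iff_dvd_diff dvdE eq_diff_eq add.commute)
  have Ha2: "Hcond 2 (a^2)"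
  proof -
    have "a^2 - 1 = 4 * (4*h^2 + 6*h + 2)" by (simp add: h power2_eq_square algebra_simps)
    then have "[a^2 = 1] (mod 4)" by (simp add: cong_iff_dvd_diff)
    moreover then have "[a^2 = 1] (mod 2)" by (rule cong_dvd_modulus) simp
    ultimately show ?thesis by (simp add: Hcond_def)
  qed
  show ?thesis
  proof (cases "even n")
    case True
    then obtain q where q: "n = q * 2" by (metis evenE mult.commute)
    have S2: "Sg a 2 = a + 1" by (simp add: Sg_def numeral_2_eq_2)
    have "Sg a n = Sg (a^2) q * (a + 1)" by (simp add: q Sg_mult S2 mult.commute)
    then have "int 2^e dvd Sg a n \<longleftrightarrow> int 2^e dvd Sg (a^2) q * (a + 1)" by simp
    also have "\<dots> \<longleftrightarrow> int 2^(e - r) dvd Sg (a^2) q" using dvd_mult_trunc[OF p e(2)] r by simp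
    also have "\<dots> \<longleftrightarrow> int 2^(e - r) dvd int q" by (rule LTE[OF p Ha2])
    also have "\<dots> \<longleftrightarrow> 2^(e - r) dvd q" by (rule int_pow_dvd_iff)
    also have "\<dots> \<longleftrightarrow> 2^(Suc (e - r)) dvd n" by (simp add: q mult.commute)
    finally show ?thesis .
  next
    case False
    have "[a = 1] (mod int 2)" using h by (simp add: cong_iff_dvd_diff)
    then have "[Sg a n = int n] (mod int 2)" by (rule Sg_cong)
    then have "odd (Sg a n)" using False by (simp add: cong_iff_dvd_diff)
    moreover have "int 2 dvd int 2^e" using e by (simp add: dvd_power)
    ultimately have "\<not> int 2^e dvd Sg a n"
    proof (intro notI)
      assume o: "odd (Sg a n)" and d2: "int 2 dvd int 2^e" and d: "int 2^e dvd Sg a n"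
      have "int 2 dvd Sg a n" using dvd_trans[OF d2 d] .
      then show False using o by simp
    qed
    moreover have "\<not> 2^(Suc (e - r)) dvd n" using False by (metis dvd_mult_left power_Suc)
    ultimately show ?thesis by simp
  qed
qed



lemma eps_ct:
  assumes a3: "[a = 3] (mod 4)" and k: "2 \<le> k" and r: "nu_trunc 2 k (a + 1) = r"
  shows "cycle_type (affine_map (2^k) a b) {0..<2^k} L
     = card {x\<in>{0..<2^k}. (if VG 2 k a b x = k then (1::nat) else 2^(Suc ((k - VG 2 k a b x) - r))) = L} div L"
proof (rule affine_ct)
  show "prime (2::nat)" by simp
  show "0 < (if VG 2 k a b x = k then (1::nat) else 2^(Suc ((k - VG 2 k a b x) - r)))" for x by simp
  show "int 2^k dvd Sg a n * ((a - 1) * int x + b) \<longleftrightarrow> (if VG 2 k a b x = k then (1::nat) else 2^(Suc ((k - VG 2 k a b x) - r))) dvd n" for x n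
  proof -
    have p: "prime (2::nat)" by simp
    have "int 2^k dvd Sg a n * ((a - 1) * int x + b) \<longleftrightarrow> int 2^(k - VG 2 k a b x) dvd Sg a n"
      by (rule dvd_mult_trunc[OF p order_refl])
    also have "\<dots> \<longleftrightarrow> (if VG 2 k a b x = k then (1::nat) else 2^(Suc ((k - VG 2 k a b x) - r))) dvd n"
    proof (cases "VG 2 k a b x = k")
      case True then show ?thesis by simp
    next
      case False
      then have e: "1 \<le> k - VG 2 k a b x" "k - VG 2 k a b x \<le> k"
        using nu_trunc_le[of 2 k "(a - 1) * int x + b"] by auto
      show ?thesis using eps_Sg[OF a3 k e r] False by simp
    qed
    finally show ?thesis .
  qed
qed

lemma a3_facts:
  assumes a3: "[a = 3] (mod 4)" and k: "2 \<le> k"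
  shows "2 \<le> nu_trunc 2 k (a + 1)" and "nu_trunc 2 k (a - 1) = 1"
proof -
  have p: "prime (2::nat)" by simp
  obtain h where h: "a = 4 * h + 3" using a3
    by (metis cong_iff_dvd_diff dvdE eq_diff_eq add.commute)
  have "int 2^2 dvd a + 1" by (simp add: h)
  then show "2 \<le> nu_trunc 2 k (a + 1)" using nu_trunc_dvd[OF p k] by simp
  show "nu_trunc 2 k (a - 1) = 1"
  proof (rule nu_trunc_unique[OF p])
    show "1 \<le> k" using k by simp
    show "\<forall>j\<le>k. int 2 ^ j dvd a - 1 \<longleftrightarrow> j \<le> 1"
    proof (intro allI impI)
      fix j assume "j \<le> k"
      show "int 2 ^ j dvd a - 1 \<longleftrightarrow> j \<le> 1"
      proof (cases "j \<le> 1")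
        case True
        then have "j = 0 \<or> j = 1" by auto
        then show ?thesis by (auto simp: h)
      next
        case False
        have "\<not> int 2 ^ j dvd a - 1"
        proof
          assume "int 2 ^ j dvd a - 1"
          moreover have "int 2^2 dvd int 2^j" using False le_imp_power_dvd[of 2 j "int 2"] by simp
          ultimately have "int 2^2 dvd a - 1" by (rule dvd_trans[rotated])
          then show False by (simp add: h) presburger
        qed
        then show ?thesis using False by simp
      qed
    qed
  qed
qed

lemma eps_odd:
  assumes a3: "[a = 3] (mod 4)" and k: "2 \<le> k" and r: "nu_trunc 2 k (a + 1) = r" and bo: "odd b"
  shows "cycle_type (affine_map (2^k) a b) {0..<2^k} = monom_of [(2^(Suc (k - r)), 2^k div 2^(Suc (k - r)))]"
proof
  fix L
  have p: "prime (2::nat)" by simp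
  have V0: "VG 2 k a b x = 0" for x
  proof (rule nu_trunc_unique[OF p])
    obtain h where h: "a = 4 * h + 3" using a3
      by (metis cong_iff_dvd_diff dvdE eq_diff_eq add.commute)
    have odd: "odd ((a - 1) * int x + b)" using bo by (simp add: h)
    show "\<forall>j\<le>k. int 2 ^ j dvd (a - 1) * int x + b \<longleftrightarrow> j \<le> 0"
    proof (intro allI impI)
      fix j assume "j \<le> k"
      show "int 2 ^ j dvd (a - 1) * int x + b \<longleftrightarrow> j \<le> 0"
      proof (cases j)
        case (Suc j')
        have "\<not> int 2 ^ j dvd (a - 1) * int x + b"
        proof
          assume "int 2 ^ j dvd (a - 1) * int x + b"
          then have "int 2 dvd (a - 1) * int x + b" using Suc by (metis dvd_mult_left power_Suc)
          then show False using odd by simp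
        qed
        then show ?thesis using Suc by simp
      qed simp
    qed
  qed simp
  have "cycle_type (affine_map (2^k) a b) {0..<2^k} L = card {x\<in>{0..<(2::nat)^k}. (2::nat)^(Suc (k - r)) = L} div L"
    using eps_ct[OF a3 k r, of b L] V0 k by simp
  also have "\<dots> = (if 2^(Suc (k - r)) = L then 2^k div L else 0)" by simp
  also have "\<dots> = monom_of [(2^(Suc (k - r)), 2^k div 2^(Suc (k - r)))] L"
    by (simp add: monom_of_Cons monom_of_Nil)
  finally show "cycle_type (affine_map (2^k) a b) {0..<2^k} L = monom_of [(2^(Suc (k - r)), 2^k div 2^(Suc (k - r)))] L" .
qed



lemma eps_even:
  assumes a3: "[a = 3] (mod 4)" and k: "2 \<le> k" and r: "nu_trunc 2 k (a + 1) = r" and be: "even b"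
  shows "cycle_type (affine_map (2^k) a b) {0..<2^k}
     = monom_of ([(1,2),(2, 2^(min r (k-1)) - 1)] @ map (\<lambda>s. (2^s, 2^(min r (k-1) - 1))) [2..<k - min r (k-1) + 1])"
proof
  fix L
  define R where "R = min r (k - 1)"
  have p: "prime (2::nat)" by simp
  have t1: "nu_trunc 2 k (a - 1) = 1" using a3_facts[OF a3 k] by simp
  have r2: "2 \<le> r" using a3_facts[OF a3 k] r by simp
  have R1: "1 \<le> R" "R \<le> k - 1" using r2 k by (auto simp: R_def)
  have tb: "int 2^1 dvd b" using be by simp
  have VG1: "1 \<le> VG 2 k a b x" for x using VG_ge[OF p t1 tb] .
  have VGk: "VG 2 k a b x \<le> k" for x by (rule nu_trunc_le)
  define per where "per x = (if VG 2 k a b x = k then (1::nat) else 2^(Suc ((k - VG 2 k a b x) - R)))" for x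
  have perR: "(if VG 2 k a b x = k then (1::nat) else 2^(Suc ((k - VG 2 k a b x) - r))) = per x" for x
  proof -
    have "(k - VG 2 k a b x) - r = (k - VG 2 k a b x) - R" using VG1[of x] by (simp add: R_def min_def)
    then show ?thesis by (simp add: per_def)
  qed
  have CT: "cycle_type (affine_map (2^k) a b) {0..<2^k} L = card {x\<in>{0..<2^k}. per x = L} div L"
    using eps_ct[OF a3 k r, of b L] perR by simp
  define X where "X = (2::nat)^R - 1"
  define Y where "Y = (2::nat)^(R - 1)"
  have injh: "inj_on (\<lambda>s. (2::nat)^s) A" for A by (rule pow_inj) simp
  have M: "monom_of ([(1,2),(2, X)] @ map (\<lambda>s. (2^s, Y)) [2..<k-R+1]) L
     = (if 1 = L then 2 else 0) + (if 2 = L then X else 0) + (if L \<in> (\<lambda>s. 2^s) ` {2..<k-R+1} then Y else 0)"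
  proof -
    have M1: "monom_of (map (\<lambda>s. (2^s, Y)) [2..<k-R+1]) L = (if L \<in> (\<lambda>s. 2^s) ` {2..<k-R+1} then Y else 0)"
      by (rule monom_of_map[OF injh])
    show ?thesis by (simp only: monom_of_append monom_of_Cons monom_of_Nil M1 add_0_right)
  qed
  have pw2: "(2::nat)^s \<ge> 4" if "2 \<le> s" for s
    using power_increasing[OF that, of "2::nat"] by simp
  have goal: "cycle_type (affine_map (2^k) a b) {0..<2^k} L = monom_of ([(1,2),(2, X)] @ map (\<lambda>s. (2^s, Y)) [2..<k-R+1]) L"
  proof -
    consider (one) "L = 1" | (two) "L = 2" | (s) \<sigma> where "2 \<le> \<sigma>" "\<sigma> \<le> k - R" "L = 2^\<sigma>"
      | (other) "L \<noteq> 1" "L \<noteq> 2" "\<forall>\<sigma>. 2 \<le> \<sigma> \<longrightarrow> \<sigma> \<le> k - R \<longrightarrow> L \<noteq> 2^\<sigma>" by blast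
    then show ?thesis
    proof cases
      case one
      have "per x = L \<longleftrightarrow> k \<le> VG 2 k a b x" for x
        using one VGk[of x] by (auto simp: per_def)
      then have "{x\<in>{0..<2^k}. per x = L} = {x\<in>{0..<2^k}. k \<le> VG 2 k a b x}" by auto
      then have "card {x\<in>{0..<2^k}. per x = L} = 2" using count_ge2[OF p t1 tb, of k] k by simp
      moreover have "L \<notin> (\<lambda>s. 2^s) ` {2..<k-R+1}" using one pw2 by fastforce
      ultimately show ?thesis using CT M one by simp
    next
      case two
      have "per x = L \<longleftrightarrow> k - R \<le> VG 2 k a b x \<and> VG 2 k a b x < k" for x
        using two VGk[of x] by (auto simp: per_def)
      then have "{x\<in>{0..<2^k}. per x = L} = {x\<in>{0..<2^k}. k - R \<le> VG 2 k a b x \<and> VG 2 k a b x < k}" by auto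
      then have "card {x\<in>{0..<2^k}. per x = L} = 2^(k + 1 - (k - R)) - 2^(k + 1 - k)"
        using count_between[OF p t1 tb, of "k - R" k] R1 by simp
      also have "\<dots> = 2 * X" using R1 k by (simp add: X_def Suc_diff_le right_diff_distrib')
      finally have c: "card {x\<in>{0..<2^k}. per x = L} = 2 * X" .
      have "L \<notin> (\<lambda>s. 2^s) ` {2..<k-R+1}" using two pw2 by fastforce
      then show ?thesis using CT M two c by simp
    next
      case s
      have "per x = L \<longleftrightarrow> k - R - \<sigma> + 1 \<le> VG 2 k a b x \<and> VG 2 k a b x < k - R - \<sigma> + 2" for x
      proof -
        have "per x = L \<longleftrightarrow> VG 2 k a b x \<noteq> k \<and> Suc ((k - VG 2 k a b x) - R) = \<sigma>"
          using s pw2[of \<sigma>] power_inject_exp[of "2::nat" "Suc ((k - VG 2 k a b x) - R)" \<sigma>]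
          by (auto simp: per_def simp del: power_Suc)
        then show ?thesis using s VGk[of x] R1 by auto
      qed
      then have "{x\<in>{0..<2^k}. per x = L} = {x\<in>{0..<2^k}. k - R - \<sigma> + 1 \<le> VG 2 k a b x \<and> VG 2 k a b x < k - R - \<sigma> + 2}"
        by auto
      then have "card {x\<in>{0..<2^k}. per x = L} = 2^(k + 1 - (k - R - \<sigma> + 1)) - 2^(k + 1 - (k - R - \<sigma> + 2))"
        using count_between[OF p t1 tb, of "k - R - \<sigma> + 1" "k - R - \<sigma> + 2"] s R1 by simp
      also have "\<dots> = 2^(R + \<sigma>) - 2^(R + \<sigma> - 1)" using s R1 by (simp add: Suc_diff_le)
      also have "\<dots> = 2^\<sigma> * (2^(R-1)*(2-1))" by (rule pdiff2[OF R1(1)])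
      finally have c: "card {x\<in>{0..<2^k}. per x = L} = 2^\<sigma> * Y" by (simp add: Y_def)
      have "L \<in> (\<lambda>s. 2^s) ` {2..<k-R+1}" using s by auto
      moreover have "1 \<noteq> L" "2 \<noteq> L" using s pw2[of \<sigma>] by auto
      ultimately have "monom_of ([(1,2),(2, X)] @ map (\<lambda>s. (2^s, Y)) [2..<k-R+1]) L = Y"
        by (simp only: M if_True if_False add_0)
      moreover have "cycle_type (affine_map (2^k) a b) {0..<2^k} L = Y"
        using CT c s by simp
      ultimately show ?thesis by simp
    next
      case other
      have "per x \<noteq> L" for x
      proof
        assume h: "per x = L"
        show False
        proof (cases "VG 2 k a b x = k")
          case True then show False using h other by (simp add: per_def)
        next
          case False
          define m where "m = (k - VG 2 k a b x) - R"
          have Lm: "L = 2^(Suc m)" using h False by (simp add: per_def m_def)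
          show False
          proof (cases m)
            case 0 then show False using Lm other by simp
          next
            case (Suc m')
            have "Suc m \<le> k - R" using Suc VG1[of x] m_def by simp
            moreover have "2 \<le> Suc m" using Suc by simp
            ultimately show False using Lm other by blast
          qed
        qed
      qed
      then have "{x\<in>{0..<2^k}. per x = L} = {}" by auto
      then have "cycle_type (affine_map (2^k) a b) {0..<2^k} L = 0" using CT by (simp only: card.empty div_0)
      moreover have "L \<notin> (\<lambda>s. 2^s) ` {2..<k-R+1}"
      proof
        assume "L \<in> (\<lambda>s. 2^s) ` {2..<k-R+1}"
        then obtain s where "2 \<le> s" "s \<le> k - R" "L = 2^s" by auto
        then show False using other by blast
      qed
      ultimately show ?thesis using M other by simp
    qed
  qed
  then show "cycle_type (affine_map (2^k) a b) {0..<2^k} L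
     = monom_of ([(1,2),(2, 2^(min r (k-1)) - 1)] @ map (\<lambda>s. (2^s, 2^(min r (k-1) - 1))) [2..<k - min r (k-1) + 1]) L"
    by (simp add: X_def Y_def R_def)
qed



lemma nu_trunc_cong:
  assumes p: "prime p" and c: "[G = G'] (mod int p^k)"
  shows "nu_trunc p k G' = nu_trunc p k G"
proof (rule nu_trunc_unique[OF p nu_trunc_le], intro allI impI)
  fix j assume j: "j \<le> k"
  have "int p^j dvd int p^k" using j by (simp add: le_imp_power_dvd)
  then have "[G = G'] (mod int p^j)" using c cong_dvd_modulus by blast
  then have "int p^j dvd G' \<longleftrightarrow> int p^j dvd G" using cong_dvd_iff by blast
  then show "int p^j dvd G' \<longleftrightarrow> j \<le> nu_trunc p k G" using nu_trunc_dvd[OF p j] by simp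
qed

lemma nu_trunc_neg:
  assumes p: "prime p"
  shows "nu_trunc p k (-G) = nu_trunc p k G"
  by (rule nu_trunc_unique[OF p nu_trunc_le]) (use nu_trunc_dvd[OF p] in auto)

lemma nu_trunc_min: "k' \<le> k \<Longrightarrow> nu_trunc p k' G = min (nu_trunc p k G) k'"
  unfolding nu_trunc_def by (auto simp: min_def)

lemma five:
  assumes k: "2 \<le> k"
  shows "nu_trunc 2 k (5^e - 1) = 2 + nu_trunc 2 (k-2) (int e)"
proof (rule nu_trunc_unique)
  show "prime (2::nat)" by simp
  show "2 + nu_trunc 2 (k-2) (int e) \<le> k" using nu_trunc_le[of 2 "k-2" "int e"] k by simp
  have H5: "Hcond 2 5" by (simp add: Hcond_def cong_def)
  have e5: "(5::int)^e - 1 = 4 * Sg 5 e" using Sg_geo[of 5 e] by simp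
  show "\<forall>j\<le>k. int 2 ^ j dvd 5 ^ e - 1 \<longleftrightarrow> j \<le> 2 + nu_trunc 2 (k-2) (int e)"
  proof (intro allI impI)
    fix j assume jk: "j \<le> k"
    show "int 2 ^ j dvd 5 ^ e - 1 \<longleftrightarrow> j \<le> 2 + nu_trunc 2 (k-2) (int e)"
    proof (cases "j \<le> 2")
      case True
      have "int 2^j dvd int 2^2" using True le_imp_power_dvd[of j 2 "int 2"] by blast
      then have "int 2^j dvd 5^e - 1" unfolding e5 by (simp add: dvd_mult2)
      then show ?thesis using True by simp
    next
      case False
      define i where "i = j - 2"
      have ji: "j = 2 + i" using False by (simp add: i_def)
      have ik: "i \<le> k - 2" using jk by (simp add: i_def)
      have "int 2 ^ j dvd 5 ^ e - 1 \<longleftrightarrow> 4 * int 2^i dvd 4 * Sg 5 e" by (simp add: ji e5 power_add)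
      also have "\<dots> \<longleftrightarrow> int 2^i dvd Sg 5 e" by (rule dvd_times_left_cancel_iff) simp
      also have "\<dots> \<longleftrightarrow> int 2^i dvd int e" by (rule LTE[OF _ H5]) simp
      also have "\<dots> \<longleftrightarrow> i \<le> nu_trunc 2 (k-2) (int e)" by (rule nu_trunc_dvd[OF _ ik]) simp
      finally show ?thesis by (simp add: ji)
    qed
  qed
qed

lemma PJ_H: "prime p \<Longrightarrow> Hcond p a \<Longrightarrow> \<forall>j\<le>k. \<forall>n. int p^j dvd Sg a n \<longleftrightarrow> int p^j dvd int n"
  by (simp add: LTE)

lemma PJ_k1:
  assumes "[a = 1] (mod int p)"
  shows "\<forall>j\<le>1. \<forall>n. int p^j dvd Sg a n \<longleftrightarrow> int p^j dvd int n"
proof (intro allI impI)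
  fix j n :: nat assume "j \<le> 1"
  then have "j = 0 \<or> j = 1" by auto
  moreover have "[Sg a n = int n] (mod int p)" using assms by (rule Sg_cong)
  then have "int p dvd Sg a n \<longleftrightarrow> int p dvd int n" using cong_dvd_iff by blast
  ultimately show "int p^j dvd Sg a n \<longleftrightarrow> int p^j dvd int n" by auto
qed

lemma mult_pp: "prime p \<Longrightarrow> \<not> p dvd d0 \<Longrightarrow> d0 > 0 \<Longrightarrow> multiplicity p (d0 * p^n) = n"
  by (simp add: multiplicity_prime_elem_times_other prime_imp_prime_elem)



theorem proposition4p6:
  fixes p k :: nat and a b :: int
  assumes hp: "prime p" and hk: "k \<ge> 1" and ha: "\<not> int p dvd a"
  defines "CT \<equiv> cycle_type (affine_map (p ^ k) a b) {0..<p ^ k}"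
      and "ordA \<equiv> ord (p ^ k) (nat (a mod int (p ^ k)))"
  shows
   "(p > 2 \<longrightarrow>
      ((\<not> [a = 1] (mod int p) \<longrightarrow>
         (let o' = p_prime_part p ordA; w = multiplicity p ordA in
          CT = monom_of ([(1, 1), (o', (p ^ (k - w) - 1) div o')] @
                 [(o' * p ^ s, p ^ (k - 1 - w) * (p - 1) div o'). s \<leftarrow> [1..<w + 1]])))
     \<and> ([a = 1] (mod int p) \<and> nu_trunc p k b \<ge> nu_trunc p k (a - 1) \<longrightarrow>
         (let t = nu_trunc p k (a - 1) in
          CT = monom_of ([(1, p ^ t)] @
                 [(p ^ s, p ^ (t - 1) * (p - 1)). s \<leftarrow> [1..<k - t + 1]])))
     \<and> ([a = 1] (mod int p) \<and> nu_trunc p k b < nu_trunc p k (a - 1) \<longrightarrow>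
          CT = monom_of [(aord (p ^ k) b, p ^ k div aord (p ^ k) b)])))
  \<and> (p = 2 \<longrightarrow>
      ((k = 1 \<or> (k = 2 \<and> [a = 1] (mod 4)) \<longrightarrow>
          CT = monom_of [(aord (2 ^ k) b, 2 ^ k div aord (2 ^ k) b)])
     \<and> (k = 2 \<and> [a = 3] (mod 4) \<longrightarrow>
          CT = (if even b then monom_of [(1, 2), (2, 1)] else monom_of [(2, 2)]))
     \<and> (k \<ge> 3 \<longrightarrow> (\<forall>\<epsilon> e :: nat. \<epsilon> \<in> {0, 1} \<and> e < 2 ^ (k - 2) \<and>
            [a = (-1) ^ \<epsilon> * 5 ^ e] (mod 2 ^ k) \<longrightarrow>
          (\<epsilon> = 1 \<and> odd b \<longrightarrow>
             (let \<nu> = nu_trunc 2 (k - 2) (int e) in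
              CT = monom_of [(2 ^ (k - 1 - \<nu>), 2 ^ (1 + \<nu>))]))
        \<and> (\<epsilon> = 1 \<and> even b \<longrightarrow>
             (let \<nu>' = nu_trunc 2 (k - 3) (int e) in
              CT = monom_of ([(1, 2), (2, 2 ^ (2 + \<nu>') - 1)] @
                     [(2 ^ s, 2 ^ (1 + \<nu>')). s \<leftarrow> [2..<k - 2 - \<nu>' + 1]])))
        \<and> (\<epsilon> = 0 \<and> nu_trunc 2 k b < nu_trunc 2 k (a - 1) \<longrightarrow>
             CT = monom_of [(aord (2 ^ k) b, 2 ^ k div aord (2 ^ k) b)])
        \<and> (\<epsilon> = 0 \<and> nu_trunc 2 k b \<ge> nu_trunc 2 k (a - 1) \<longrightarrow>
             (let \<nu> = nu_trunc 2 (k - 2) (int e) in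
              CT = monom_of ([(1, 2 ^ (2 + \<nu>))] @
                     [(2 ^ s, 2 ^ (1 + \<nu>)). s \<leftarrow> [1..<k - 2 - \<nu> + 1]])))))))"
proof -
  have p1: "1 < p" using hp prime_gt_1_nat by auto
  have PART1: "p > 2 \<longrightarrow>
      ((\<not> [a = 1] (mod int p) \<longrightarrow>
         (let o' = p_prime_part p ordA; w = multiplicity p ordA in
          CT = monom_of ([(1, 1), (o', (p ^ (k - w) - 1) div o')] @
                 [(o' * p ^ s, p ^ (k - 1 - w) * (p - 1) div o'). s \<leftarrow> [1..<w + 1]])))
     \<and> ([a = 1] (mod int p) \<and> nu_trunc p k b \<ge> nu_trunc p k (a - 1) \<longrightarrow>
         (let t = nu_trunc p k (a - 1) in
          CT = monom_of ([(1, p ^ t)] @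
                 [(p ^ s, p ^ (t - 1) * (p - 1)). s \<leftarrow> [1..<k - t + 1]])))
     \<and> ([a = 1] (mod int p) \<and> nu_trunc p k b < nu_trunc p k (a - 1) \<longrightarrow>
          CT = monom_of [(aord (p ^ k) b, p ^ k div aord (p ^ k) b)]))"
  proof (rule impI, intro conjI)
    assume p2: "2 < p"
    then have pn2: "p \<noteq> 2" by simp
    show "\<not> [a = 1] (mod int p) \<longrightarrow>
         (let o' = p_prime_part p ordA; w = multiplicity p ordA in
          CT = monom_of ([(1, 1), (o', (p ^ (k - w) - 1) div o')] @
                 [(o' * p ^ s, p ^ (k - 1 - w) * (p - 1) div o'). s \<leftarrow> [1..<w + 1]]))"
    proof
      assume n1: "\<not> [a = 1] (mod int p)"
      then have na1: "\<not> int p dvd a - 1" by (simp add: cong_iff_dvd_diff)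
      obtain d0 c where d0: "1 < d0" "\<not> p dvd d0" and c: "1 \<le> c" "c \<le> k"
        and key: "\<And>i n. 1 \<le> i \<Longrightarrow> i \<le> k \<Longrightarrow> int p^i dvd a^n - 1 \<longleftrightarrow> d0 * p^(i - c) dvd n"
        using Ia_ord[OF hp pn2 hk ha na1] by metis
      have ord: "ordA = d0 * p^(k - c)" unfolding ordA_def by (rule Ia_ct(1)[OF hp hk na1 d0(1) c key])
      have ct: "CT = monom_of ([(1,1),(d0, (p^c - 1) div d0)] @ map (\<lambda>s. (d0*p^s, p^(c-1)*(p-1) div d0)) [1..<k-c+1])"
        unfolding CT_def by (rule Ia_ct(2)[OF hp hk na1 d0(1) c key])
      have w: "multiplicity p ordA = k - c" using mult_pp[OF hp d0(2)] d0(1) by (simp add: ord)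
      have o: "p_prime_part p ordA = d0" unfolding p_prime_part_def w using p1 by (simp add: ord)
      have e1: "k - (k - c) = c" "k - 1 - (k - c) = c - 1" using c by auto
      show "let o' = p_prime_part p ordA; w = multiplicity p ordA in
          CT = monom_of ([(1, 1), (o', (p ^ (k - w) - 1) div o')] @
                 [(o' * p ^ s, p ^ (k - 1 - w) * (p - 1) div o'). s \<leftarrow> [1..<w + 1]])"
        unfolding Let_def o w e1 ct by (rule refl)
    qed
    have Ha: "[a = 1] (mod int p) \<Longrightarrow> Hcond p a" using pn2 by (simp add: Hcond_def)
    show "[a = 1] (mod int p) \<and> nu_trunc p k b \<ge> nu_trunc p k (a - 1) \<longrightarrow>
         (let t = nu_trunc p k (a - 1) in
          CT = monom_of ([(1, p ^ t)] @
                 [(p ^ s, p ^ (t - 1) * (p - 1)). s \<leftarrow> [1..<k - t + 1]]))"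
    proof
      assume h: "[a = 1] (mod int p) \<and> nu_trunc p k b \<ge> nu_trunc p k (a - 1)"
      have t1: "1 \<le> nu_trunc p k (a - 1)" using nu_trunc_dvd[OF hp hk, of "a - 1"] h
        by (simp add: cong_iff_dvd_diff)
      show "let t = nu_trunc p k (a - 1) in
          CT = monom_of ([(1, p ^ t)] @
                 [(p ^ s, p ^ (t - 1) * (p - 1)). s \<leftarrow> [1..<k - t + 1]])"
        unfolding Let_def CT_def
        by (rule caseU2[OF hp PJ_H[OF hp Ha] refl t1]) (use h in auto)
    qed
    show "[a = 1] (mod int p) \<and> nu_trunc p k b < nu_trunc p k (a - 1) \<longrightarrow>
          CT = monom_of [(aord (p ^ k) b, p ^ k div aord (p ^ k) b)]"
    proof
      assume h: "[a = 1] (mod int p) \<and> nu_trunc p k b < nu_trunc p k (a - 1)"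
      show "CT = monom_of [(aord (p ^ k) b, p ^ k div aord (p ^ k) b)]"
        unfolding CT_def by (rule caseU1[OF hp PJ_H[OF hp Ha]]) (use h in auto)
    qed
  qed
  have PART2: "p = 2 \<longrightarrow>
      ((k = 1 \<or> (k = 2 \<and> [a = 1] (mod 4)) \<longrightarrow>
          CT = monom_of [(aord (2 ^ k) b, 2 ^ k div aord (2 ^ k) b)])
     \<and> (k = 2 \<and> [a = 3] (mod 4) \<longrightarrow>
          CT = (if even b then monom_of [(1, 2), (2, 1)] else monom_of [(2, 2)]))
     \<and> (k \<ge> 3 \<longrightarrow> (\<forall>\<epsilon> e :: nat. \<epsilon> \<in> {0, 1} \<and> e < 2 ^ (k - 2) \<and>
            [a = (-1) ^ \<epsilon> * 5 ^ e] (mod 2 ^ k) \<longrightarrow>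
          (\<epsilon> = 1 \<and> odd b \<longrightarrow>
             (let \<nu> = nu_trunc 2 (k - 2) (int e) in
              CT = monom_of [(2 ^ (k - 1 - \<nu>), 2 ^ (1 + \<nu>))]))
        \<and> (\<epsilon> = 1 \<and> even b \<longrightarrow>
             (let \<nu>' = nu_trunc 2 (k - 3) (int e) in
              CT = monom_of ([(1, 2), (2, 2 ^ (2 + \<nu>') - 1)] @
                     [(2 ^ s, 2 ^ (1 + \<nu>')). s \<leftarrow> [2..<k - 2 - \<nu>' + 1]])))
        \<and> (\<epsilon> = 0 \<and> nu_trunc 2 k b < nu_trunc 2 k (a - 1) \<longrightarrow>
             CT = monom_of [(aord (2 ^ k) b, 2 ^ k div aord (2 ^ k) b)])
        \<and> (\<epsilon> = 0 \<and> nu_trunc 2 k b \<ge> nu_trunc 2 k (a - 1) \<longrightarrow>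
             (let \<nu> = nu_trunc 2 (k - 2) (int e) in
              CT = monom_of ([(1, 2 ^ (2 + \<nu>))] @
                     [(2 ^ s, 2 ^ (1 + \<nu>)). s \<leftarrow> [1..<k - 2 - \<nu> + 1]]))))))"
  proof (rule impI, intro conjI)
    assume p2: "p = 2"
    have P: "prime (2::nat)" by simp
    have CT2: "CT = cycle_type (affine_map (2^k) a b) {0..<2^k}" unfolding CT_def p2 ..
    have aodd: "odd a" using ha p2 by simp
    have a21: "[a = 1] (mod int 2)" using aodd by (simp add: cong_iff_dvd_diff)
    show "k = 1 \<or> (k = 2 \<and> [a = 1] (mod 4)) \<longrightarrow>
          CT = monom_of [(aord (2 ^ k) b, 2 ^ k div aord (2 ^ k) b)]"
    proof
      assume h: "k = 1 \<or> (k = 2 \<and> [a = 1] (mod 4))"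
      have PJ: "\<forall>j\<le>k. \<forall>n. int 2^j dvd Sg a n \<longleftrightarrow> int 2^j dvd int n"
      proof (cases "k = 1")
        case True then show ?thesis using PJ_k1[OF a21] by simp
      next
        case False
        then have "Hcond 2 a" using h a21 by (simp add: Hcond_def)
        then show ?thesis by (rule PJ_H[OF P])
      qed
      have dk: "int 2^k dvd a - 1"
      proof (cases "k = 1")
        case True then show ?thesis using a21 by (simp add: cong_iff_dvd_diff)
      next
        case False then show ?thesis using h by (simp add: cong_iff_dvd_diff)
      qed
      have t: "nu_trunc 2 k (a - 1) = k"
        using nu_trunc_dvd[OF P order_refl, of k "a - 1"] dk nu_trunc_le[of 2 k "a - 1"] by simp
      show "CT = monom_of [(aord (2 ^ k) b, 2 ^ k div aord (2 ^ k) b)]"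
      proof (cases "nu_trunc 2 k b < nu_trunc 2 k (a - 1)")
        case True
        show ?thesis unfolding CT2 by (rule caseU1[OF P PJ True])
      next
        case False
        then have s: "nu_trunc 2 k b = k" using t nu_trunc_le[of 2 k b] by simp
        have "CT = monom_of ([(1, 2^k)] @ map (\<lambda>s. (2^s, 2^(k-1)*(2-1))) [1..<k-k+1])"
          unfolding CT2 by (rule caseU2[OF P PJ t]) (use hk s in auto)
        moreover have "aord (2^k) b = 1" using aord_eq[OF P, of k b] s by simp
        ultimately show ?thesis by simp
      qed
    qed
    show "k = 2 \<and> [a = 3] (mod 4) \<longrightarrow>
          CT = (if even b then monom_of [(1, 2), (2, 1)] else monom_of [(2, 2)])"
    proof
      assume h: "k = 2 \<and> [a = 3] (mod 4)"
      then have a3: "[a = 3] (mod 4)" and k2: "k = 2" by auto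
      have r: "nu_trunc 2 2 (a + 1) = 2" using a3_facts(1)[OF a3, of 2] nu_trunc_le[of 2 2 "a+1"] by simp
      show "CT = (if even b then monom_of [(1, 2), (2, 1)] else monom_of [(2, 2)])"
      proof (cases "even b")
        case True
        have "CT = monom_of ([(1,2),(2, 2^(min 2 (2-1)) - 1)] @ map (\<lambda>s. (2^s, 2^(min 2 (2-1) - 1))) [2..<2 - min 2 (2-1) + 1])"
          unfolding CT2 k2 by (rule eps_even[OF a3 _ r True]) simp
        then show ?thesis using True by simp
      next
        case False
        have "CT = monom_of [(2^(Suc (2 - 2)), 2^2 div 2^(Suc (2 - 2)))]"
          unfolding CT2 k2 by (rule eps_odd[OF a3 _ r False]) simp
        then show ?thesis using False by simp
      qed
    qed
    show "k \<ge> 3 \<longrightarrow> (\<forall>\<epsilon> e :: nat. \<epsilon> \<in> {0, 1} \<and> e < 2 ^ (k - 2) \<and>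
            [a = (-1) ^ \<epsilon> * 5 ^ e] (mod 2 ^ k) \<longrightarrow>
          (\<epsilon> = 1 \<and> odd b \<longrightarrow>
             (let \<nu> = nu_trunc 2 (k - 2) (int e) in
              CT = monom_of [(2 ^ (k - 1 - \<nu>), 2 ^ (1 + \<nu>))]))
        \<and> (\<epsilon> = 1 \<and> even b \<longrightarrow>
             (let \<nu>' = nu_trunc 2 (k - 3) (int e) in
              CT = monom_of ([(1, 2), (2, 2 ^ (2 + \<nu>') - 1)] @
                     [(2 ^ s, 2 ^ (1 + \<nu>')). s \<leftarrow> [2..<k - 2 - \<nu>' + 1]])))
        \<and> (\<epsilon> = 0 \<and> nu_trunc 2 k b < nu_trunc 2 k (a - 1) \<longrightarrow>
             CT = monom_of [(aord (2 ^ k) b, 2 ^ k div aord (2 ^ k) b)])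
        \<and> (\<epsilon> = 0 \<and> nu_trunc 2 k b \<ge> nu_trunc 2 k (a - 1) \<longrightarrow>
             (let \<nu> = nu_trunc 2 (k - 2) (int e) in
              CT = monom_of ([(1, 2 ^ (2 + \<nu>))] @
                     [(2 ^ s, 2 ^ (1 + \<nu>)). s \<leftarrow> [1..<k - 2 - \<nu> + 1]]))))"
    proof (intro impI allI)
      fix \<epsilon> e :: nat
      assume k3: "3 \<le> k" and H: "\<epsilon> \<in> {0, 1} \<and> e < 2 ^ (k - 2) \<and> [a = (-1) ^ \<epsilon> * 5 ^ e] (mod 2 ^ k)"
      have k2: "2 \<le> k" using k3 by simp
      define \<nu> where "\<nu> = nu_trunc 2 (k - 2) (int e)"
      have \<nu>le: "\<nu> \<le> k - 2" by (simp add: \<nu>_def nu_trunc_le)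
      have fv: "nu_trunc 2 k (5^e - 1) = 2 + \<nu>" using five[OF k2, of e] by (simp add: \<nu>_def)
      have c5: "[(5::int)^e = 1] (mod 4)" using cong_pow[of "5::int" 1 4 e] by (simp add: cong_def)
      have d4: "(4::int) dvd 2^k"
      proof -
        have "(2::int)^k = 2^(2 + (k-2))" by (subst le_add_diff_inverse[OF k2]) (rule refl)
        also have "\<dots> = 2^2 * 2^(k-2)" by (rule power_add)
        finally show ?thesis by simp
      qed
      show "(\<epsilon> = 1 \<and> odd b \<longrightarrow>
             (let \<nu> = nu_trunc 2 (k - 2) (int e) in
              CT = monom_of [(2 ^ (k - 1 - \<nu>), 2 ^ (1 + \<nu>))]))
        \<and> (\<epsilon> = 1 \<and> even b \<longrightarrow>
             (let \<nu>' = nu_trunc 2 (k - 3) (int e) in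
              CT = monom_of ([(1, 2), (2, 2 ^ (2 + \<nu>') - 1)] @
                     [(2 ^ s, 2 ^ (1 + \<nu>')). s \<leftarrow> [2..<k - 2 - \<nu>' + 1]])))
        \<and> (\<epsilon> = 0 \<and> nu_trunc 2 k b < nu_trunc 2 k (a - 1) \<longrightarrow>
             CT = monom_of [(aord (2 ^ k) b, 2 ^ k div aord (2 ^ k) b)])
        \<and> (\<epsilon> = 0 \<and> nu_trunc 2 k b \<ge> nu_trunc 2 k (a - 1) \<longrightarrow>
             (let \<nu> = nu_trunc 2 (k - 2) (int e) in
              CT = monom_of ([(1, 2 ^ (2 + \<nu>))] @
                     [(2 ^ s, 2 ^ (1 + \<nu>)). s \<leftarrow> [1..<k - 2 - \<nu> + 1]])))"
      proof (cases "\<epsilon> = 1")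
        case True
        have ca: "[a = - (5^e)] (mod 2^k)" using H True by simp
        have a3: "[a = 3] (mod 4)"
        proof -
          have "[a = - (5^e)] (mod 4)" using cong_dvd_modulus[OF ca d4] .
          moreover have "[- ((5::int)^e) = - 1] (mod 4)" using c5 by (simp add: cong_minus_minus_iff)
          moreover have "[- 1 = (3::int)] (mod 4)" by (simp add: cong_def)
          ultimately show ?thesis by (meson cong_trans)
        qed
        have r: "nu_trunc 2 k (a + 1) = 2 + \<nu>"
        proof -
          have "[a + 1 = - (5^e) + 1] (mod int 2^k)" using cong_add[OF ca cong_refl[of 1]] by simp
          then have "nu_trunc 2 k (a + 1) = nu_trunc 2 k (- (5^e) + 1)" using nu_trunc_cong[OF P] by metis
          also have "\<dots> = nu_trunc 2 k (- (5^e - 1))" by simp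
          also have "\<dots> = nu_trunc 2 k (5^e - 1)" by (rule nu_trunc_neg[OF P])
          finally show ?thesis using fv by simp
        qed
        have e1: "Suc (k - (2 + \<nu>)) = k - 1 - \<nu>" using \<nu>le k2 by simp
        have e2: "(2::nat)^k div 2^(k - 1 - \<nu>) = 2^(1 + \<nu>)"
        proof -
          have "(2::nat)^(k - (k - 1 - \<nu>)) = 2^k div 2^(k - 1 - \<nu>)" by (rule power_diff) auto
          moreover have "k - (k - 1 - \<nu>) = 1 + \<nu>" using \<nu>le k2 by simp
          ultimately show ?thesis by simp
        qed
        have odd_case: "odd b \<longrightarrow> CT = monom_of [(2 ^ (k - 1 - \<nu>), 2 ^ (1 + \<nu>))]"
        proof
          assume bo: "odd b"
          have "CT = monom_of [(2^(Suc (k - (2 + \<nu>))), 2^k div 2^(Suc (k - (2 + \<nu>))))]"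
            unfolding CT2 by (rule eps_odd[OF a3 k2 r bo])
          then show "CT = monom_of [(2 ^ (k - 1 - \<nu>), 2 ^ (1 + \<nu>))]" by (simp only: e1 e2)
        qed
        define \<nu>' where "\<nu>' = nu_trunc 2 (k - 3) (int e)"
        have \<nu>': "\<nu>' = min \<nu> (k - 3)" unfolding \<nu>'_def \<nu>_def by (rule nu_trunc_min) simp
        have R: "min (2 + \<nu>) (k - 1) = 2 + \<nu>'" using \<nu>' k3 by (simp add: min_def) arith
        have even_case: "even b \<longrightarrow> CT = monom_of ([(1, 2), (2, 2 ^ (2 + \<nu>') - 1)] @
                     [(2 ^ s, 2 ^ (1 + \<nu>')). s \<leftarrow> [2..<k - 2 - \<nu>' + 1]])"
        proof
          assume be: "even b"
          have "CT = monom_of ([(1,2),(2, 2^(min (2 + \<nu>) (k-1)) - 1)] @ map (\<lambda>s. (2^s, 2^(min (2 + \<nu>) (k-1) - 1))) [2..<k - min (2 + \<nu>) (k-1) + 1])"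
            unfolding CT2 by (rule eps_even[OF a3 k2 r be])
          then show "CT = monom_of ([(1, 2), (2, 2 ^ (2 + \<nu>') - 1)] @
                     [(2 ^ s, 2 ^ (1 + \<nu>')). s \<leftarrow> [2..<k - 2 - \<nu>' + 1]])"
            unfolding R by simp
        qed
        show ?thesis using True odd_case even_case by (simp add: Let_def \<nu>_def \<nu>'_def)
      next
        case False
        then have e0: "\<epsilon> = 0" using H by simp
        have ca: "[a = 5^e] (mod 2^k)" using H e0 by simp
        have ca4: "[a = 5^e] (mod 4)" using cong_dvd_modulus[OF ca d4] .
        have a14: "[a = 1] (mod 4)" using cong_trans[OF ca4 c5] .
        have Ha: "Hcond 2 a" using a14 a21 by (simp add: Hcond_def)
        have t: "nu_trunc 2 k (a - 1) = 2 + \<nu>"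
        proof -
          have "[a - 1 = 5^e - 1] (mod int 2^k)" using cong_diff[OF ca cong_refl[of 1]] by simp
          then have "nu_trunc 2 k (a - 1) = nu_trunc 2 k (5^e - 1)" using nu_trunc_cong[OF P] by metis
          then show ?thesis using fv by simp
        qed
        have c3: "nu_trunc 2 k b < nu_trunc 2 k (a - 1) \<longrightarrow>
             CT = monom_of [(aord (2 ^ k) b, 2 ^ k div aord (2 ^ k) b)]"
          unfolding CT2 using caseU1[OF P PJ_H[OF P Ha]] by blast
        have c4: "nu_trunc 2 k b \<ge> nu_trunc 2 k (a - 1) \<longrightarrow>
              CT = monom_of ([(1, 2 ^ (2 + \<nu>))] @
                     [(2 ^ s, 2 ^ (1 + \<nu>)). s \<leftarrow> [1..<k - 2 - \<nu> + 1]])"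
        proof
          assume st: "nu_trunc 2 k b \<ge> nu_trunc 2 k (a - 1)"
          have "CT = monom_of ([(1, 2^(2+\<nu>))] @ map (\<lambda>s. (2^s, 2^(2+\<nu>-1)*(2-1))) [1..<k-(2+\<nu>)+1])"
            unfolding CT2 by (rule caseU2[OF P PJ_H[OF P Ha] t]) (use st t in auto)
          then show "CT = monom_of ([(1, 2 ^ (2 + \<nu>))] @
                     [(2 ^ s, 2 ^ (1 + \<nu>)). s \<leftarrow> [1..<k - 2 - \<nu> + 1]])" by simp
        qed
        show ?thesis using e0 c3 c4 by (simp add: Let_def \<nu>_def)
      qed
    qed
  qed
  show ?thesis using PART1 PART2 by blast
qed


end
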